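(* Let $n$ be an ambient name and $T_1$ a pure mobile-ambient process. Define the binary predicate $\mathcal{P}^{-|open\ n.T_1}(X,Y)$ on pure processes to hold iff there exist a process $P''$ and a name $m\notin fn(X)$ such that $P''\downarrow_m$, $C'[X]\rightsquigarrow P''\rightsquigarrow Y$ and not $Y\downarrow_m$, where $C'[-]=-\mid open\ n.(m[\mathbf{0}]\mid open\ m.T_1)$. Then $\mathcal{P}^{-|open\ n.T_1}$ is stable under $\sim^{BS}_M$, and for all pure processes $P,P'$: $\mathcal{P}^{-|open\ n.T_1}(P,P')$ holds if and only if $P\xrightarrow{-|open\ n.T_1}_{M_I}P'$.
   Context: Mobile ambients (finite, communication-free fragment). Pure processes $P::=\mathbf{0}\mid n[P]\mid M.P\mid(\nu n)P\mid P_1|P_2$, $M::=in\ n\mid out\ n\mid open\ n$; extended processes also allow process variables $X$ and ambients $x[P]$ with name variables $x$ (each variable at most once). Structural congruence $\equiv$: least congruence with $|$ commutative, associative, unit $\mathbf{0}$; $(\nu n)(\nu m)P\equiv(\nu m)(\nu n)P$; $(\nu n)(P|Q)\equiv P|(\nu n)Q$ if $n\notin fn(P)$; $(\nu n)m[P]\equiv m[(\nu n)P]$ if $n\ne m$; $(\nu n)M.P\equiv M.(\nu n)P$ if $n\notin fn(M)$; $\alpha$-conversion. Reduction $\rightsquigarrow$: least relation closed under $\equiv$, $(\nu n)-$, $n[-]$, $-|R$, generated by $n[in\ m.P|Q]|m[R]\rightsquigarrow m[n[P|Q]|R]$, $m[n[out\ m.P|Q]|R]\rightsquigarrow n[P|Q]|m[R]$,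 $open\ n.P|n[Q]\rightsquigarrow P|Q$. Barb $P\downarrow_n$ iff $P\equiv(\nu A)(n[Q]|R)$ with $n\notin A$. Barbed saturated bisimilarity $\sim^{BS}_M$ is the largest symmetric relation $\mathcal{R}$ on pure processes such that if $P\,\mathcal{R}\,Q$ then for every (pure, unary) context $C[-]$ and name $n$: $C[P]\downarrow_n$ implies $C[Q]\downarrow_n$, and $C[P]\rightsquigarrow P'$ implies $C[Q]\rightsquigarrow Q'$ for some $Q'$ with $P'\,\mathcal{R}\,Q'$. A predicate $\mathcal{P}(X,Y)$ is stable under $\mathcal{R}$ if whenever $P\,\mathcal{R}\,Q$ and $\mathcal{P}(P,P')$ there is $Q'$ with $\mathcal{P}(Q,Q')$ and $P'\,\mathcal{R}\,Q'$. The only rule of the transition system $M$ producing labels of shape $-|open\ n.X_1$ is (CoOpen): if $P\equiv(\nu A)(n[P_1]|P_2)$ with $n\notin A$ then $P\xrightarrow{-|open\ n.X_1}(\nu A)(P_1|X_1|P_2)$. $M_I$ instantiates variables: $P\xrightarrow{C[-]}_{M_I}Q$ iff $P\xrightarrow{C_\epsilon[-]}Q_\epsilon$ in $M$ and for some capture-avoiding substitution $\sigma$ of pure processes/names for variables, $Q_\epsilon\sigma\equiv Q$ and $C_\epsilon[-]\sigma=C[-]$. Thus $P\xrightarrow{-|open\ n.T_1}_{M_I}P'$ iff $P\equiv(\nu A)(n[P_1]|P_2)$, $n\notin A$, and $P'\equiv(\nu A)(P_1|T_1|P_2)$ (after $\alpha$-converting $A$ away from $fn(T_1)$). *)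

theory Defs
  imports Main
begin

text \<open>Finite, communication-free mobile ambients. Names are natural numbers
(an infinite supply of names).\<close>

type_synonym name = nat

datatype cap = In name | Out name | Open name

datatype proc =
    Nil
  | Amb name proc
  | Pre cap proc
  | Res name proc
  | Par proc proc

fun fn_cap :: "cap \<Rightarrow> name set" where
  "fn_cap (In n) = {n}"
| "fn_cap (Out n) = {n}"
| "fn_cap (Open n) = {n}"

fun fn :: "proc \<Rightarrow> name set" where
  "fn Nil = {}"
| "fn (Amb n P) = insert n (fn P)"
| "fn (Pre M P) = fn_cap M \<union> fn P"
| "fn (Res n P) = fn P - {n}"
| "fn (Par P Q) = fn P \<union> fn Q"

definition swp :: "name \<Rightarrow> name \<Rightarrow> name \<Rightarrow> name" where
  "swp a b c = (if c = a then b else if c = b then a else c)"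

fun swap_cap :: "name \<Rightarrow> name \<Rightarrow> cap \<Rightarrow> cap" where
  "swap_cap a b (In n) = In (swp a b n)"
| "swap_cap a b (Out n) = Out (swp a b n)"
| "swap_cap a b (Open n) = Open (swp a b n)"

text \<open>Name transposition (applied to all occurrences, binders included);
used to express alpha-conversion.\<close>
fun swap :: "name \<Rightarrow> name \<Rightarrow> proc \<Rightarrow> proc" where
  "swap a b Nil = Nil"
| "swap a b (Amb n P) = Amb (swp a b n) (swap a b P)"
| "swap a b (Pre M P) = Pre (swap_cap a b M) (swap a b P)"
| "swap a b (Res n P) = Res (swp a b n) (swap a b P)"
| "swap a b (Par P Q) = Par (swap a b P) (swap a b Q)"

fun resl :: "name list \<Rightarrow> proc \<Rightarrow> proc" where
  "resl [] P = P"
| "resl (a # A) P = Res a (resl A P)"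

inductive scong :: "proc \<Rightarrow> proc \<Rightarrow> bool" where
  sc_refl: "scong P P"
| sc_sym: "scong P Q \<Longrightarrow> scong Q P"
| sc_trans: "scong P Q \<Longrightarrow> scong Q R \<Longrightarrow> scong P R"
| sc_amb: "scong P Q \<Longrightarrow> scong (Amb n P) (Amb n Q)"
| sc_pre: "scong P Q \<Longrightarrow> scong (Pre M P) (Pre M Q)"
| sc_res: "scong P Q \<Longrightarrow> scong (Res n P) (Res n Q)"
| sc_par: "scong P P' \<Longrightarrow> scong Q Q' \<Longrightarrow> scong (Par P Q) (Par P' Q')"
| sc_par_comm: "scong (Par P Q) (Par Q P)"
| sc_par_assoc: "scong (Par (Par P Q) R) (Par P (Par Q R))"
| sc_par_nil: "scong (Par P Nil) P"
| sc_res_res: "scong (Res n (Res m P)) (Res m (Res n P))"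
| sc_res_par: "n \<notin> fn P \<Longrightarrow> scong (Res n (Par P Q)) (Par P (Res n Q))"
| sc_res_amb: "n \<noteq> m \<Longrightarrow> scong (Res n (Amb m P)) (Amb m (Res n P))"
| sc_res_pre: "n \<notin> fn_cap M \<Longrightarrow> scong (Res n (Pre M P)) (Pre M (Res n P))"
| sc_alpha: "m \<notin> fn P \<Longrightarrow> scong (Res n P) (Res m (swap n m P))"

inductive red :: "proc \<Rightarrow> proc \<Rightarrow> bool" where
  red_in: "red (Par (Amb n (Par (Pre (In m) P) Q)) (Amb m R))
               (Amb m (Par (Amb n (Par P Q)) R))"
| red_out: "red (Amb m (Par (Amb n (Par (Pre (Out m) P) Q)) R))
                (Par (Amb n (Par P Q)) (Amb m R))"
| red_open: "red (Par (Pre (Open n) P) (Amb n Q)) (Par P Q)"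
| red_res: "red P Q \<Longrightarrow> red (Res n P) (Res n Q)"
| red_amb: "red P Q \<Longrightarrow> red (Amb n P) (Amb n Q)"
| red_par: "red P Q \<Longrightarrow> red (Par P R) (Par Q R)"
| red_scong: "scong P P' \<Longrightarrow> red P' Q' \<Longrightarrow> scong Q' Q \<Longrightarrow> red P Q"

definition barb :: "proc \<Rightarrow> name \<Rightarrow> bool" where
  "barb P n \<longleftrightarrow> (\<exists>A Q R. scong P (resl A (Par (Amb n Q) R)) \<and> n \<notin> set A)"

text \<open>Pure unary contexts (exactly one hole); filling may capture names.\<close>
datatype ctx =
    Hole
  | CAmb name ctx
  | CPre cap ctx
  | CRes name ctx
  | CParL ctx proc
  | CParR proc ctx

fun fill :: "ctx \<Rightarrow> proc \<Rightarrow> proc" where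
  "fill Hole P = P"
| "fill (CAmb n C) P = Amb n (fill C P)"
| "fill (CPre M C) P = Pre M (fill C P)"
| "fill (CRes n C) P = Res n (fill C P)"
| "fill (CParL C Q) P = Par (fill C P) Q"
| "fill (CParR Q C) P = Par Q (fill C P)"

definition bs_bisimulation :: "(proc \<Rightarrow> proc \<Rightarrow> bool) \<Rightarrow> bool" where
  "bs_bisimulation R \<longleftrightarrow>
     (\<forall>P Q. R P Q \<longrightarrow> R Q P) \<and>
     (\<forall>P Q. R P Q \<longrightarrow>
        (\<forall>C n. barb (fill C P) n \<longrightarrow> barb (fill C Q) n) \<and>
        (\<forall>C P'. red (fill C P) P' \<longrightarrow> (\<exists>Q'. red (fill C Q) Q' \<and> R P' Q')))"

definition bs_bisim :: "proc \<Rightarrow> proc \<Rightarrow> bool" where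
  "bs_bisim P Q \<longleftrightarrow> (\<exists>R. bs_bisimulation R \<and> R P Q)"

definition stable :: "(proc \<Rightarrow> proc \<Rightarrow> bool) \<Rightarrow> (proc \<Rightarrow> proc \<Rightarrow> bool) \<Rightarrow> bool" where
  "stable Pr R \<longleftrightarrow> (\<forall>P Q P'. R P Q \<longrightarrow> Pr P P' \<longrightarrow> (\<exists>Q'. Pr Q Q' \<and> R P' Q'))"

definition Popen :: "name \<Rightarrow> proc \<Rightarrow> proc \<Rightarrow> proc \<Rightarrow> bool" where
  "Popen n T1 X Y \<longleftrightarrow>
     (\<exists>P'' m. m \<notin> fn X \<and> barb P'' m \<and>
        red (fill (CParL Hole (Pre (Open n) (Par (Amb m Nil) (Pre (Open m) T1)))) X) P'' \<and>
        red P'' Y \<and> \<not> barb Y m)"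

text \<open>Transition P --(-|open n.T1)-->_{M_I} P': rule (CoOpen) of M, with the
process variable X1 instantiated (capture-avoidingly) by T1.\<close>
definition coopen_MI :: "name \<Rightarrow> proc \<Rightarrow> proc \<Rightarrow> proc \<Rightarrow> bool" where
  "coopen_MI n T1 P P' \<longleftrightarrow>
     (\<exists>A P1 P2. scong P (resl A (Par (Amb n P1) P2)) \<and> n \<notin> set A \<and>
        set A \<inter> fn T1 = {} \<and>
        scong P' (resl A (Par (Par P1 T1) P2)))"

end

theory Submission
  imports Defs
begin


lemma swp_simps[simp]: "swp a b a = b" "swp a b b = a"
  "c \<noteq> a \<Longrightarrow> c \<noteq> b \<Longrightarrow> swp a b c = c"
  by (auto simp: swp_def)

lemma swp_swp[simp]: "swp a b (swp a b c) = c" by (auto simp: swp_def)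
lemma swp_inj[simp]: "(swp a b x = swp a b y) = (x = y)" by (auto simp: swp_def)
lemma swp_same[simp]: "swp a a c = c" by (auto simp: swp_def)
lemma swp_sym: "swp a b = swp b a" by (auto simp: swp_def fun_eq_iff)

lemma swap_cap_swap_cap[simp]: "swap_cap a b (swap_cap a b M) = M" by (cases M) auto
lemma swap_swap[simp]: "swap a b (swap a b P) = P" by (induction P) auto
lemma swap_cap_same[simp]: "swap_cap a a M = M" by (cases M) auto
lemma swap_same[simp]: "swap a a P = P" by (induction P) auto
lemma swap_cap_sym: "swap_cap a b M = swap_cap b a M" by (cases M) (auto simp: swp_sym)
lemma swap_sym: "swap a b P = swap b a P" by (induction P) (auto simp: swp_sym swap_cap_sym)

lemma fn_cap_swap[simp]: "fn_cap (swap_cap a b M) = swp a b ` fn_cap M" by (cases M) auto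
lemma fn_swap[simp]: "fn (swap a b P) = swp a b ` fn P"
  by (induction P) (auto simp: image_Un image_set_diff inj_on_def)

lemma swp_in_image[simp]: "(swp a b x \<in> swp a b ` S) = (x \<in> S)" by auto


lemma swp_comm: "swp a b (swp n m x) = swp (swp a b n) (swp a b m) (swp a b x)"
  unfolding swp_def by (simp split: if_splits)
lemma swap_cap_comm: "swap_cap a b (swap_cap n m M) = swap_cap (swp a b n) (swp a b m) (swap_cap a b M)"
  apply (cases M) 
  apply (simp_all only: swap_cap.simps)
  apply (simp_all only: swp_comm[of a b n m])
  done
lemma swap_comm: "swap a b (swap n m P) = swap (swp a b n) (swp a b m) (swap a b P)"
proof (induction P)
  case (Res k P) then show ?case by (simp only: swap.simps swp_comm[of a b n m])
next
  case (Amb k P) then show ?case by (simp only: swap.simps swp_comm[of a b n m])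
next
  case (Pre M P) then show ?case by (simp only: swap.simps swap_cap_comm[of a b n m])
qed (simp_all only: swap.simps)
lemma size_swap[simp]: "size (swap a b P) = size P" by (induction P) auto

lemma finite_fn_cap[simp]: "finite (fn_cap M)" by (cases M) auto
lemma finite_fn[simp]: "finite (fn P)" by (induction P) auto

lemma swap_fresh_cap: "a \<notin> fn_cap M \<Longrightarrow> b \<notin> fn_cap M \<Longrightarrow> swap_cap a b M = M"
  by (cases M) auto

lemmas sc_intros = sc_refl sc_amb sc_pre sc_res sc_par

lemma scong_fn: "scong P Q \<Longrightarrow> fn P = fn Q"
proof (induction rule: scong.induct)
  case (sc_alpha m P n)
  show ?case
  proof (cases "m = n")
    case True then show ?thesis by simp
  next
    case False
    show ?thesis using sc_alpha False by (auto simp: swp_def split: if_splits)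
  qed
qed auto

lemma swap_fresh: "a \<notin> fn P \<Longrightarrow> b \<notin> fn P \<Longrightarrow> scong (swap a b P) P"
proof (induction P)
  case (Res c Q)
  show ?case
  proof (cases "a = b")
    case True then show ?thesis by (simp add: sc_refl)
  next
    case ab: False
    show ?thesis
    proof (cases "c = a")
      case True
      have "scong (Res a Q) (Res b (swap a b Q))" using Res.prems ab True by (intro sc_alpha) auto
      then show ?thesis using True by (simp add: sc_sym)
    next
      case ca: False
      show ?thesis
      proof (cases "c = b")
        case True
        have "scong (Res b Q) (Res a (swap b a Q))" using Res.prems ab True by (intro sc_alpha) auto
        then show ?thesis using True by (simp add: sc_sym swap_sym)
      next
        case False
        then show ?thesis using ca Res by (auto intro: sc_res)
      qed
    qed
  qed
next
  case (Pre M P) then show ?case by (auto simp: swap_fresh_cap intro: sc_pre)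
qed (auto intro: sc_intros)

lemma scong_swap: "scong P Q \<Longrightarrow> scong (swap a b P) (swap a b Q)"
proof (induction rule: scong.induct)
  case (sc_alpha m P n)
  have "scong (Res (swp a b n) (swap a b P)) (Res (swp a b m) (swap (swp a b n) (swp a b m) (swap a b P)))"
    using sc_alpha by (intro scong.sc_alpha) auto
  then show ?case by (simp only: swap.simps swap_comm[of a b n m])
next
  case (sc_res_pre n M P)
  then show ?case by (simp add: scong.sc_res_pre)
next
  case (sc_res_par n P Q)
  then show ?case by (simp add: scong.sc_res_par)
next
  case (sc_res_amb n m P) then show ?case by (simp add: scong.sc_res_amb)
next
  case (sc_sym P Q) then show ?case by (simp add: scong.sc_sym)
next
  case (sc_trans P Q R) then show ?case by (metis scong.sc_trans)
next
  case (sc_amb P Q n) then show ?case by (simp add: scong.sc_amb)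
next
  case (sc_pre P Q M) then show ?case by (simp add: scong.sc_pre)
next
  case (sc_res P Q n) then show ?case by (simp add: scong.sc_res)
next
  case (sc_par P P' Q Q') then show ?case by (simp add: scong.sc_par)
qed (simp_all add: scong.sc_refl scong.sc_par_comm scong.sc_par_assoc scong.sc_par_nil scong.sc_res_res)

declare sc_trans[trans]

lemma sc_comm: "scong (Par P Q) (Par Q P)" by (rule sc_par_comm)
lemma sc_assoc: "scong (Par (Par P Q) R) (Par P (Par Q R))" by (rule sc_par_assoc)
lemma sc_assoc': "scong (Par P (Par Q R)) (Par (Par P Q) R)" by (rule sc_sym, rule sc_par_assoc)
lemma sc_nil: "scong (Par P Nil) P" by (rule sc_par_nil)
lemma sc_nil': "scong P (Par P Nil)" by (rule sc_sym, rule sc_par_nil)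
lemma sc_nilL: "scong (Par Nil P) P" by (meson sc_par_comm sc_par_nil sc_trans)
lemma sc_parL: "scong P P' \<Longrightarrow> scong (Par P Q) (Par P' Q)" by (simp add: sc_par sc_refl)
lemma sc_parR: "scong Q Q' \<Longrightarrow> scong (Par P Q) (Par P Q')" by (simp add: sc_par sc_refl)
lemma sc_res_parR: "n \<notin> fn Q \<Longrightarrow> scong (Res n (Par P Q)) (Par (Res n P) Q)"
proof -
  assume "n \<notin> fn Q"
  have "scong (Res n (Par P Q)) (Res n (Par Q P))" by (simp add: sc_res sc_par_comm)
  also have "scong \<dots> (Par Q (Res n P))" using \<open>n \<notin> fn Q\<close> by (rule sc_res_par)
  also have "scong \<dots> (Par (Res n P) Q)" by (rule sc_par_comm)
  finally show ?thesis .
qed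
lemma sc_swap_mid: "scong (Par (Par P Q) R) (Par (Par P R) Q)"
proof -
  have "scong (Par (Par P Q) R) (Par P (Par Q R))" by (rule sc_assoc)
  also have "scong \<dots> (Par P (Par R Q))" by (rule sc_parR, rule sc_comm)
  also have "scong \<dots> (Par (Par P R) Q)" by (rule sc_assoc')
  finally show ?thesis .
qed
lemma sc_par4: "scong (Par (Par P Q) (Par R S)) (Par (Par P R) (Par Q S))"
proof -
  have "scong (Par (Par P Q) (Par R S)) (Par (Par (Par P Q) R) S)" by (rule sc_assoc')
  also have "scong \<dots> (Par (Par (Par P R) Q) S)" by (rule sc_parL, rule sc_swap_mid)
  also have "scong \<dots> (Par (Par P R) (Par Q S))" by (rule sc_assoc)
  finally show ?thesis .
qed

lemma fn_resl[simp]: "fn (resl A P) = fn P - set A"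
  by (induction A) auto
lemma resl_append[simp]: "resl (A @ B) P = resl A (resl B P)"
  by (induction A) auto
lemma resl_cong: "scong P Q \<Longrightarrow> scong (resl A P) (resl A Q)"
  by (induction A) (auto intro: sc_res)
lemma resl_par: "set A \<inter> fn R = {} \<Longrightarrow> scong (Par (resl A P) R) (resl A (Par P R))"
proof (induction A)
  case Nil then show ?case by (simp add: sc_refl)
next
  case (Cons a A)
  have "scong (Par (resl (a # A) P) R) (Res a (Par (resl A P) R))"
    using Cons.prems by (simp add: sc_sym sc_res_parR)
  also have "scong \<dots> (Res a (resl A (Par P R)))" using Cons by (simp add: sc_res)
  finally show ?case by simp
qed
lemma resl_parL: "set A \<inter> fn R = {} \<Longrightarrow> scong (Par R (resl A P)) (resl A (Par R P))"
proof -
  assume h: "set A \<inter> fn R = {}"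
  have "scong (Par R (resl A P)) (Par (resl A P) R)" by (rule sc_comm)
  also have "scong \<dots> (resl A (Par P R))" using h by (rule resl_par)
  also have "scong \<dots> (resl A (Par R P))" by (rule resl_cong, rule sc_comm)
  finally show ?thesis .
qed
lemma res_resl: "j \<notin> set A \<Longrightarrow> scong (Res j (resl A P)) (resl A (Res j P))"
proof (induction A)
  case Nil then show ?case by (simp add: sc_refl)
next
  case (Cons a A)
  have "scong (Res j (Res a (resl A P))) (Res a (Res j (resl A P)))" by (rule sc_res_res)
  also have "scong \<dots> (Res a (resl A (Res j P)))" using Cons by (simp add: sc_res)
  finally show ?case by simp
qed
lemma resl_pre: "set A \<inter> fn_cap M = {} \<Longrightarrow> scong (resl A (Pre M P)) (Pre M (resl A P))"
proof (induction A)
  case Nil then show ?case by (simp add: sc_refl)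
next
  case (Cons a A)
  have "scong (Res a (resl A (Pre M P))) (Res a (Pre M (resl A P)))" using Cons by (simp add: sc_res)
  also have "scong \<dots> (Pre M (Res a (resl A P)))" using Cons.prems by (intro sc_res_pre) auto
  finally show ?case by simp
qed
lemma resl_amb: "k \<notin> set A \<Longrightarrow> scong (resl A (Amb k P)) (Amb k (resl A P))"
proof (induction A)
  case Nil then show ?case by (simp add: sc_refl)
next
  case (Cons a A)
  have "scong (Res a (resl A (Amb k P))) (Res a (Amb k (resl A P)))" using Cons by (simp add: sc_res)
  also have "scong \<dots> (Amb k (Res a (resl A P)))" using Cons.prems by (intro sc_res_amb) auto
  finally show ?case by simp
qed

fun tops :: "proc \<Rightarrow> name set" where
  "tops Nil = {}" | "tops (Amb k P) = {k}" | "tops (Pre M P) = {}"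
| "tops (Res j P) = tops P - {j}" | "tops (Par P Q) = tops P \<union> tops Q"

fun ugs :: "proc \<Rightarrow> name set" where
  "ugs Nil = {}" | "ugs (Amb k P) = insert k (ugs P)" | "ugs (Pre M P) = {}"
| "ugs (Res j P) = ugs P - {j}" | "ugs (Par P Q) = ugs P \<union> ugs Q"

fun np :: "proc \<Rightarrow> nat" where
  "np Nil = 0" | "np (Amb k P) = 1" | "np (Pre M P) = 1"
| "np (Res j P) = np P" | "np (Par P Q) = np P + np Q"

fun ac :: "proc \<Rightarrow> nat" where
  "ac Nil = 0" | "ac (Amb k P) = 1" | "ac (Pre M P) = 0"
| "ac (Res j P) = ac P" | "ac (Par P Q) = ac P + ac Q"

fun deep :: "proc \<Rightarrow> nat" where
  "deep Nil = 0" | "deep (Amb k P) = Suc (deep P)" | "deep (Pre M P) = Suc (deep P)"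
| "deep (Res j P) = deep P" | "deep (Par P Q) = deep P + deep Q"

fun gc :: "proc \<Rightarrow> nat" where
  "gc Nil = 0" | "gc (Amb k P) = gc P" | "gc (Pre M P) = gc P"
| "gc (Res j P) = (if j \<in> fn P then 0 else 1) + gc P" | "gc (Par P Q) = gc P + gc Q"

fun er :: "proc \<Rightarrow> proc" where
  "er Nil = Nil" | "er (Amb k P) = Amb k (er P)" | "er (Pre M P) = Pre M (er P)"
| "er (Res j P) = (if j \<in> fn P then Res j (er P) else er P)" | "er (Par P Q) = Par (er P) (er Q)"

lemma tops_fn: "tops P \<subseteq> fn P" by (induction P) auto
lemma ugs_fn: "ugs P \<subseteq> fn P" by (induction P) auto
lemma tops_ugs: "tops P \<subseteq> ugs P" by (induction P) auto
lemma fn_er[simp]: "fn (er P) = fn P" by (induction P) auto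
lemma deep0_fn: "deep P = 0 \<Longrightarrow> fn P = {}" by (induction P) auto
lemma np_deep: "np P \<le> deep P" by (induction P) auto
lemma ac_np: "ac P \<le> np P" by (induction P) auto

lemma tops_swap[simp]: "tops (swap a b P) = swp a b ` tops P"
  by (induction P) (auto simp: image_Un image_set_diff inj_on_def)
lemma ugs_swap[simp]: "ugs (swap a b P) = swp a b ` ugs P"
  by (induction P) (auto simp: image_Un image_set_diff inj_on_def)
lemma np_swap[simp]: "np (swap a b P) = np P" by (induction P) auto
lemma ac_swap[simp]: "ac (swap a b P) = ac P" by (induction P) auto
lemma deep_swap[simp]: "deep (swap a b P) = deep P" by (induction P) auto
lemma gc_swap[simp]: "gc (swap a b P) = gc P" by (induction P) auto
lemma er_swap[simp]: "er (swap a b P) = swap a b (er P)" by (induction P) auto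

lemma alpha_set_eq:
  assumes "m \<notin> fn P" "S \<subseteq> fn P"
  shows "swp n m ` S - {m} = S - {n}"
  using assms by (auto simp: swp_def split: if_splits)

lemma scong_inv_nat:
  assumes "scong P Q"
  shows "np P = np Q \<and> ac P = ac Q \<and> deep P = deep Q \<and> gc P = gc Q"
  using assms
proof (induction rule: scong.induct)
  case (sc_res_par n P Q)
  then show ?case by auto
next
  case (sc_res_res n m P)
  then show ?case by auto
next
  case (sc_res_amb n m P) then show ?case by auto
next
  case (sc_res_pre n M P) then show ?case by auto
next
  case (sc_alpha m P n)
  have "(m \<in> swp n m ` fn P) = (n \<in> fn P)"
    using sc_alpha by (auto simp: swp_def split: if_splits)
  then show ?case by simp
qed (auto dest: scong_fn)

lemma scong_tops: "scong P Q \<Longrightarrow> tops P = tops Q"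
proof (induction rule: scong.induct)
  case (sc_alpha m P n)
  then show ?case using alpha_set_eq[OF sc_alpha tops_fn] by simp
next
  case (sc_res_par n P Q) then show ?case using tops_fn[of P] by auto
qed auto

lemma scong_ugs: "scong P Q \<Longrightarrow> ugs P = ugs Q"
proof (induction rule: scong.induct)
  case (sc_alpha m P n)
  then show ?case using alpha_set_eq[OF sc_alpha ugs_fn] by simp
next
  case (sc_res_par n P Q) then show ?case using ugs_fn[of P] by auto
qed auto

lemma scong_er: "scong P Q \<Longrightarrow> scong (er P) (er Q)"
proof (induction rule: scong.induct)
  case (sc_refl P) then show ?case by (rule scong.sc_refl)
next
  case (sc_sym P Q) then show ?case by (blast intro: scong.sc_sym)
next
  case (sc_trans P Q R) then show ?case by (blast intro: scong.sc_trans)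
next
  case (sc_amb P Q n) then show ?case by (simp add: scong.sc_amb)
next
  case (sc_pre P Q M) then show ?case by (simp add: scong.sc_pre)
next
  case (sc_res P Q n) then show ?case using scong_fn[OF sc_res(1)] by (simp add: scong.sc_res)
next
  case (sc_par P P' Q Q') then show ?case by (simp add: scong.sc_par)
next
  case (sc_par_comm P Q) then show ?case by (simp add: scong.sc_par_comm)
next
  case (sc_par_assoc P Q R) then show ?case by (simp add: scong.sc_par_assoc)
next
  case (sc_par_nil P) then show ?case by (simp add: scong.sc_par_nil)
next
  case (sc_res_res n m P)
  show ?case
  proof (cases "n = m")
    case True then show ?thesis by (simp add: scong.sc_refl)
  next
    case False
    then show ?thesis by (auto simp: scong.sc_refl scong.sc_res_res)
  qed
next
  case (sc_res_par n P Q) then show ?case by (auto simp: scong.sc_refl scong.sc_res_par)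
next
  case (sc_res_amb n m P) then show ?case by (auto simp: scong.sc_refl scong.sc_res_amb)
next
  case (sc_res_pre n M P) then show ?case by (auto simp: scong.sc_refl scong.sc_res_pre)
next
  case (sc_alpha m P n)
  show ?case
  proof (cases "m = n")
    case True then show ?thesis by (simp add: scong.sc_refl)
  next
    case False
    have iff: "(m \<in> swp n m ` fn P) = (n \<in> fn P)"
      using sc_alpha by (auto simp: swp_def split: if_splits)
    show ?thesis
    proof (cases "n \<in> fn P")
      case True
      then show ?thesis using iff sc_alpha by (simp add: scong.sc_alpha)
    next
      case False
      then have "scong (swap n m (er P)) (er P)" using sc_alpha by (intro swap_fresh) auto
      then show ?thesis using iff False by (simp add: scong.sc_sym)
    qed
  qed
qed

fun gar :: "nat \<Rightarrow> proc" where
  "gar 0 = Nil" | "gar (Suc k) = Res 0 (gar k)"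

lemma fn_gar[simp]: "fn (gar k) = {}" by (induction k) auto
lemma gc_gar[simp]: "gc (gar k) = k" by (induction k) auto
lemma er_gar[simp]: "er (gar k) = Nil" by (induction k) auto
lemma deep_gar[simp]: "deep (gar k) = 0" by (induction k) auto
lemma np_gar[simp]: "np (gar k) = 0" by (induction k) auto
lemma tops_gar[simp]: "tops (gar k) = {}" by (induction k) auto

lemma gar_add: "scong (Par (gar a) (gar b)) (gar (a + b))"
proof (induction a)
  case 0 then show ?case by (simp add: sc_nilL)
next
  case (Suc a)
  have "scong (Par (gar (Suc a)) (gar b)) (Res 0 (Par (gar a) (gar b)))"
    by (simp add: sc_sym sc_res_parR)
  also have "scong \<dots> (Res 0 (gar (a+b)))" using Suc by (rule sc_res)
  finally show ?case by simp
qed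

lemma mig_amb: "deep g = 0 \<Longrightarrow> scong (Amb k (Par Q g)) (Par (Amb k Q) g)"
proof (induction g arbitrary: Q rule: measure_induct_rule[where f = size])
  case (less g)
  show ?case
  proof (cases g)
    case Nil
    then show ?thesis by (meson sc_nil sc_nil' sc_amb sc_trans)
  next
    case (Amb x y) then show ?thesis using less by simp
  next
    case (Pre x y) then show ?thesis using less by simp
  next
    case (Par g1 g2)
    have d: "deep g1 = 0" "deep g2 = 0" using less Par by auto
    have "scong (Amb k (Par Q g)) (Amb k (Par (Par Q g1) g2))" using Par by (simp add: sc_amb sc_assoc')
    also have "scong \<dots> (Par (Amb k (Par Q g1)) g2)" using less Par d by auto
    also have "scong \<dots> (Par (Par (Amb k Q) g1) g2)" using less Par d by (auto intro: sc_parL)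
    also have "scong \<dots> (Par (Amb k Q) g)" using Par by (simp add: sc_assoc)
    finally show ?thesis .
  next
    case (Res j g')
    have fg: "fn g' = {}" using less Res by (simp add: deep0_fn)
    obtain x where x: "x \<notin> fn Q" "x \<noteq> k"
      using finite_fn[of "Par Q (Amb k Nil)"] by (metis UnCI ex_new_if_finite fn.simps(2) fn.simps(5) infinite_UNIV_nat insertI1)
    define g'' where "g'' = swap j x g'"
    have d'': "deep g'' = 0" "size g'' < size g" using less Res by (auto simp: g''_def)
    have a1: "scong g (Res x g'')" using Res fg unfolding g''_def by (simp add: sc_alpha)
    have "scong (Amb k (Par Q g)) (Amb k (Par Q (Res x g'')))" using a1 by (simp add: sc_amb sc_parR)
    also have "scong \<dots> (Amb k (Res x (Par Q g'')))" using x by (simp add: sc_amb sc_res_par sc_sym)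
    also have "scong \<dots> (Res x (Amb k (Par Q g'')))" using x by (simp add: sc_res_amb sc_sym)
    also have "scong \<dots> (Res x (Par (Amb k Q) g''))" using less d'' by (simp add: sc_res)
    also have "scong \<dots> (Par (Amb k Q) (Res x g''))" using x by (simp add: sc_res_par)
    also have "scong \<dots> (Par (Amb k Q) g)" using a1 by (simp add: sc_parR sc_sym)
    finally show ?thesis .
  qed
qed

lemma mig_pre: "deep g = 0 \<Longrightarrow> scong (Pre M (Par Q g)) (Par (Pre M Q) g)"
proof (induction g arbitrary: Q rule: measure_induct_rule[where f = size])
  case (less g)
  show ?case
  proof (cases g)
    case Nil
    then show ?thesis by (meson sc_nil sc_nil' sc_pre sc_trans)
  next
    case (Amb x y) then show ?thesis using less by simp
  next
    case (Pre x y) then show ?thesis using less by simp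
  next
    case (Par g1 g2)
    have d: "deep g1 = 0" "deep g2 = 0" using less Par by auto
    have "scong (Pre M (Par Q g)) (Pre M (Par (Par Q g1) g2))" using Par by (simp add: sc_pre sc_assoc')
    also have "scong \<dots> (Par (Pre M (Par Q g1)) g2)" using less Par d by auto
    also have "scong \<dots> (Par (Par (Pre M Q) g1) g2)" using less Par d by (auto intro: sc_parL)
    also have "scong \<dots> (Par (Pre M Q) g)" using Par by (simp add: sc_assoc)
    finally show ?thesis .
  next
    case (Res j g')
    have fg: "fn g' = {}" using less Res by (simp add: deep0_fn)
    obtain x where x: "x \<notin> fn Q" "x \<notin> fn_cap M"
      using finite_fn[of "Par Q (Pre M Nil)"] by (metis UnCI ex_new_if_finite fn.simps(3) fn.simps(5) infinite_UNIV_nat)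
    define g'' where "g'' = swap j x g'"
    have d'': "deep g'' = 0" "size g'' < size g" using less Res by (auto simp: g''_def)
    have a1: "scong g (Res x g'')" using Res fg unfolding g''_def by (simp add: sc_alpha)
    have "scong (Pre M (Par Q g)) (Pre M (Par Q (Res x g'')))" using a1 by (simp add: sc_pre sc_parR)
    also have "scong \<dots> (Pre M (Res x (Par Q g'')))" using x by (simp add: sc_pre sc_res_par sc_sym)
    also have "scong \<dots> (Res x (Pre M (Par Q g'')))" using x by (simp add: sc_res_pre sc_sym)
    also have "scong \<dots> (Res x (Par (Pre M Q) g''))" using less d'' by (simp add: sc_res)
    also have "scong \<dots> (Par (Pre M Q) (Res x g''))" using x by (simp add: sc_res_par)
    also have "scong \<dots> (Par (Pre M Q) g)" using a1 by (simp add: sc_parR sc_sym)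
    finally show ?thesis .
  qed
qed

lemma er_decomp: "scong P (Par (er P) (gar (gc P)))"
proof (induction P)
  case Nil then show ?case by (simp add: sc_nil')
next
  case (Amb k P)
  have "scong (Amb k P) (Amb k (Par (er P) (gar (gc P))))" using Amb by (rule sc_amb)
  also have "scong \<dots> (Par (Amb k (er P)) (gar (gc P)))" by (rule mig_amb) simp
  finally show ?case by simp
next
  case (Pre M P)
  have "scong (Pre M P) (Pre M (Par (er P) (gar (gc P))))" using Pre by (rule sc_pre)
  also have "scong \<dots> (Par (Pre M (er P)) (gar (gc P)))" by (rule mig_pre) simp
  finally show ?case by simp
next
  case (Par P Q)
  have "scong (Par P Q) (Par (Par (er P) (gar (gc P))) (Par (er Q) (gar (gc Q))))"
    using Par by (rule sc_par)
  also have "scong \<dots> (Par (Par (er P) (er Q)) (Par (gar (gc P)) (gar (gc Q))))" by (rule sc_par4)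
  also have "scong \<dots> (Par (Par (er P) (er Q)) (gar (gc P + gc Q)))" by (rule sc_parR, rule gar_add)
  finally show ?case by simp
next
  case (Res j P)
  show ?case
  proof (cases "j \<in> fn P")
    case True
    have "scong (Res j P) (Res j (Par (er P) (gar (gc P))))" using Res by (rule sc_res)
    also have "scong \<dots> (Par (Res j (er P)) (gar (gc P)))" by (rule sc_res_parR) simp
    finally show ?thesis using True by simp
  next
    case False
    have "scong (Res j P) (Res j (Par P Nil))" by (rule sc_res, rule sc_nil')
    also have "scong \<dots> (Par P (Res j Nil))" using False by (rule sc_res_par)
    also have "scong \<dots> (Par P (gar 1))"
    proof -
      have "scong (Res j Nil) (Res 0 (swap j 0 Nil))" by (rule sc_alpha) simp
      then show ?thesis by (simp add: sc_parR)
    qed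
    also have "scong \<dots> (Par (Par (er P) (gar (gc P))) (gar 1))" using Res by (rule sc_parL)
    also have "scong \<dots> (Par (er P) (Par (gar (gc P)) (gar 1)))" by (rule sc_assoc)
    also have "scong \<dots> (Par (er P) (gar (gc P + 1)))" by (rule sc_parR, rule gar_add)
    finally show ?thesis using False by simp
  qed
qed

lemma deep0_er: "deep P = 0 \<Longrightarrow> scong (er P) Nil"
proof (induction P)
  case (Par P Q)
  then have "scong (er (Par P Q)) (Par Nil Nil)" by (simp add: sc_par)
  then show ?case by (meson sc_nil sc_trans)
next
  case (Res j P) then show ?case using deep0_fn[of P] by simp
qed (auto simp: sc_refl)

lemma er_er[simp]: "er (er P) = er P" by (induction P) auto
lemma gc_er[simp]: "gc (er P) = 0" by (induction P) auto
lemma deep_er[simp]: "deep (er P) = deep P" by (induction P) auto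
lemma np_er[simp]: "np (er P) = np P" by (induction P) auto
lemma ac_er[simp]: "ac (er P) = ac P" by (induction P) auto
lemma tops_er[simp]: "tops (er P) = tops P"
  by (induction P) (use tops_fn in auto)
lemma ugs_er[simp]: "ugs (er P) = ugs P"
  by (induction P) (use ugs_fn in auto)

definition geq :: "proc \<Rightarrow> proc \<Rightarrow> bool" where
  "geq X Y \<longleftrightarrow> scong (er X) (er Y)"

lemma geq_refl[simp]: "geq X X" by (simp add: geq_def sc_refl)
lemma geq_sym: "geq X Y \<Longrightarrow> geq Y X" by (simp add: geq_def sc_sym)
lemma geq_trans[trans]: "geq X Y \<Longrightarrow> geq Y Z \<Longrightarrow> geq X Z" unfolding geq_def by (rule sc_trans)
lemma scong_geq: "scong X Y \<Longrightarrow> geq X Y" by (simp add: geq_def scong_er)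
lemma geq_fn: "geq X Y \<Longrightarrow> fn X = fn Y" unfolding geq_def by (metis scong_fn fn_er)
lemma geq_tops: "geq X Y \<Longrightarrow> tops X = tops Y" unfolding geq_def by (metis scong_tops tops_er)
lemma geq_ugs: "geq X Y \<Longrightarrow> ugs X = ugs Y" unfolding geq_def by (metis scong_ugs ugs_er)
lemma geq_nat: "geq X Y \<Longrightarrow> np X = np Y \<and> ac X = ac Y \<and> deep X = deep Y"
  unfolding geq_def by (metis scong_inv_nat np_er ac_er deep_er)
lemma geq_par: "geq X X' \<Longrightarrow> geq Y Y' \<Longrightarrow> geq (Par X Y) (Par X' Y')"
  by (simp add: geq_def sc_par)
lemma geq_amb: "geq X Y \<Longrightarrow> geq (Amb k X) (Amb k Y)" by (simp add: geq_def sc_amb)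
lemma geq_pre: "geq X Y \<Longrightarrow> geq (Pre M X) (Pre M Y)" by (simp add: geq_def sc_pre)
lemma geq_res: "geq X Y \<Longrightarrow> geq (Res j X) (Res j Y)"
  using geq_fn[of X Y] by (simp add: geq_def sc_res)
lemma geq_resl: "geq X Y \<Longrightarrow> geq (resl A X) (resl A Y)"
  by (induction A) (auto intro: geq_res)
lemma geq_er: "geq (er X) X" by (simp add: geq_def sc_refl)
lemma geq_garb: "deep g = 0 \<Longrightarrow> geq (Par X g) X"
  unfolding geq_def by (simp, meson deep0_er sc_nil sc_parR sc_trans)
lemma geq_garbL: "deep g = 0 \<Longrightarrow> geq (Par g X) X"
  by (meson geq_garb geq_trans sc_comm scong_geq)
lemma geq_gc: "geq X Y \<Longrightarrow> gc X = gc Y \<Longrightarrow> scong X Y"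
proof -
  assume a: "geq X Y" "gc X = gc Y"
  have "scong X (Par (er X) (gar (gc X)))" by (rule er_decomp)
  also have "scong \<dots> (Par (er Y) (gar (gc Y)))" using a by (simp add: geq_def sc_parL)
  also have "scong \<dots> Y" by (rule sc_sym, rule er_decomp)
  finally show ?thesis .
qed
lemma geq_scong_trans: "geq X Y \<Longrightarrow> scong Y Z \<Longrightarrow> geq X Z"
  using geq_trans scong_geq by blast
lemma scong_geq_trans: "scong X Y \<Longrightarrow> geq Y Z \<Longrightarrow> geq X Z"
  using geq_trans scong_geq by blast

fun pf :: "proc \<Rightarrow> (cap \<times> proc) option" where
  "pf Nil = None" | "pf (Amb k P) = None" | "pf (Pre M P) = Some (M, P)"
| "pf (Res j P) = (case pf P of None \<Rightarrow> None
     | Some (M, B) \<Rightarrow> (if j \<in> fn_cap M then None else Some (M, Res j B)))"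
| "pf (Par P Q) = (if np Q = 0 then (case pf P of None \<Rightarrow> None | Some (M, B) \<Rightarrow> Some (M, Par B Q))
     else if np P = 0 then (case pf Q of None \<Rightarrow> None | Some (M, B) \<Rightarrow> Some (M, Par P B))
     else None)"

definition prel :: "(cap \<times> proc) option \<Rightarrow> (cap \<times> proc) option \<Rightarrow> bool" where
  "prel o1 o2 \<longleftrightarrow> (o1 = None \<and> o2 = None) \<or> (\<exists>M B B'. o1 = Some (M, B) \<and> o2 = Some (M, B') \<and> scong B B')"

lemma pf_np: "pf P = Some x \<Longrightarrow> np P = 1"
  by (induction P arbitrary: x) (auto split: option.splits if_splits)
lemma np0_pf: "np P = 0 \<Longrightarrow> pf P = None"
  using pf_np by (metis not_None_eq zero_neq_one)
lemma pf_fn: "pf P = Some (M, B) \<Longrightarrow> fn P = fn_cap M \<union> fn B"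
  by (induction P arbitrary: M B) (auto split: option.splits if_splits)
lemma pf_swap: "pf (swap a b P) = map_option (\<lambda>(M, B). (swap_cap a b M, swap a b B)) (pf P)"
  by (induction P) (auto split: option.splits if_splits)

lemma prel_refl: "prel x x" by (cases x) (auto simp: prel_def sc_refl)
lemma prel_sym: "prel x y \<Longrightarrow> prel y x" by (auto simp: prel_def sc_sym)
lemma prel_trans: "prel x y \<Longrightarrow> prel y z \<Longrightarrow> prel x z" by (auto simp: prel_def intro: sc_trans)

lemma scong_pf: "scong P Q \<Longrightarrow> prel (pf P) (pf Q)"
proof (induction rule: scong.induct)
  case (sc_refl P) then show ?case by (rule prel_refl)
next
  case (sc_sym P Q) then show ?case by (blast intro: prel_sym)
next
  case (sc_trans P Q R) then show ?case by (blast intro: prel_trans)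
next
  case (sc_amb P Q n) then show ?case by (simp add: prel_def)
next
  case (sc_pre P Q M) then show ?case by (simp add: prel_def)
next
  case (sc_res P Q n) then show ?case unfolding prel_def using scong.sc_res by (auto split: option.splits)
next
  case (sc_par P P' Q Q')
  have n1: "np P = np P'" "np Q = np Q'" using sc_par(1,2) scong_inv_nat by auto
  show ?case using sc_par.IH n1 sc_par(1,2) by (auto simp: prel_def intro: scong.sc_par split: option.splits)
next
  case (sc_par_comm P Q)
  show ?case by (auto simp: prel_def sc_refl sc_comm np0_pf split: option.splits)
next
  case (sc_par_assoc P Q R)
  show ?case by (auto simp: prel_def sc_refl np0_pf sc_assoc sc_assoc' dest: pf_np split: option.splits)
next
  case (sc_par_nil P) then show ?case by (auto simp: prel_def sc_nil split: option.splits)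
next
  case (sc_res_res n m P) then show ?case by (auto simp: prel_def sc_refl intro: scong.sc_res_res split: option.splits)
next
  case (sc_res_par n P Q)
  then show ?case using pf_fn[of P] pf_fn[of Q]
    by (auto simp: prel_def sc_refl np0_pf intro: scong.sc_res_par sc_res_parR split: option.splits)
next
  case (sc_res_amb n m P) then show ?case by (simp add: prel_def)
next
  case (sc_res_pre n M P) then show ?case by (simp add: prel_def sc_refl)
next
  case (sc_alpha m P n)
  show ?case
  proof (cases "pf P")
    case None then show ?thesis by (simp add: pf_swap prel_def)
  next
    case (Some x)
    obtain M B where x: "x = (M, B)" by force
    have fP: "fn P = fn_cap M \<union> fn B" using pf_fn Some x by auto
    show ?thesis
    proof (cases "n \<in> fn_cap M")
      case True
      then have "m \<in> fn_cap (swap_cap n m M)" by (simp add: image_iff) (metis swp_simps(1))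
      then show ?thesis using Some x True by (simp add: pf_swap prel_def)
    next
      case False
      have mM: "m \<notin> fn_cap M" using sc_alpha fP by auto
      then have sw: "swap_cap n m M = M" using False by (simp add: swap_fresh_cap)
      have "m \<notin> fn B" using sc_alpha fP by auto
      then have "scong (Res n B) (Res m (swap n m B))" by (rule scong.sc_alpha)
      then show ?thesis using Some x False mM sw by (simp add: pf_swap prel_def)
    qed
  qed
qed

lemma pre_inv: "scong (Pre M B) (Pre M' B') \<Longrightarrow> M = M' \<and> scong B B'"
  using scong_pf[of "Pre M B" "Pre M' B'"] by (simp add: prel_def)

lemma np0_deep: "np X = 0 \<Longrightarrow> deep X = 0" by (induction X) auto

inductive Comp :: "proc \<Rightarrow> proc \<Rightarrow> proc \<Rightarrow> bool" where
  c_base: "np P = 1 \<Longrightarrow> (\<forall>a b. P \<noteq> Par a b) \<Longrightarrow> Comp P Nil P"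
| c_parL: "Comp P X C \<Longrightarrow> Comp (Par P Q) (Par X Q) C"
| c_parR: "Comp Q X C \<Longrightarrow> Comp (Par P Q) (Par P X) C"
| c_resX: "Comp P X C \<Longrightarrow> j \<notin> fn C \<Longrightarrow> Comp (Res j P) (Res j X) C"
| c_resC: "Comp P X C \<Longrightarrow> j \<notin> fn X \<Longrightarrow> Comp (Res j P) X (Res j C)"

inductive_cases comp_ParE: "Comp (Par P Q) X C"
inductive_cases comp_ResE: "Comp (Res j P) X C"
inductive_cases comp_AmbE: "Comp (Amb k P) X C"
inductive_cases comp_PreE: "Comp (Pre M P) X C"
inductive_cases comp_NilE: "Comp Nil X C"

lemma comp_sound: "Comp P X C \<Longrightarrow> scong P (Par X C) \<and> np C = 1 \<and> fn P = fn X \<union> fn C \<and> np P = np X + np C"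
proof (induction rule: Comp.induct)
  case (c_base P) then show ?case by (auto simp: sc_nilL sc_sym)
next
  case (c_parL P X C Q)
  then show ?case by (auto intro: sc_trans[OF sc_parL sc_swap_mid])
next
  case (c_parR Q X C P)
  then show ?case by (auto intro: sc_trans[OF sc_parR sc_assoc'])
next
  case (c_resX P X C j)
  then show ?case by (auto intro: sc_trans[OF sc_res sc_res_parR])
next
  case (c_resC P X C j)
  then show ?case by (auto intro: sc_trans[OF sc_res sc_res_par])
qed

lemma comp_np: "Comp P X C \<Longrightarrow> np P \<ge> 1" using comp_sound by fastforce

lemma comp_swap: "Comp P X C \<Longrightarrow> Comp (swap a b P) (swap a b X) (swap a b C)"
proof (induction rule: Comp.induct)
  case (c_base P)
  have "\<forall>x y. swap a b P \<noteq> Par x y" using c_base(2) by (cases P) auto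
  then show ?case using c_base by (simp add: Comp.c_base)
next
  case (c_parL P X C Q) then show ?case by (simp add: Comp.c_parL)
next
  case (c_parR Q X C P) then show ?case by (simp add: Comp.c_parR)
next
  case (c_resX P X C j) then show ?case by (simp add: Comp.c_resX)
next
  case (c_resC P X C j) then show ?case by (simp add: Comp.c_resC)
qed

lemma comp_exists: "np Q = 1 \<Longrightarrow> \<exists>X C. Comp Q X C \<and> np X = 0"
proof (induction Q)
  case Nil then show ?case by simp
next
  case (Amb k P) then show ?case using Comp.c_base[of "Amb k P"] by auto
next
  case (Pre M P) then show ?case using Comp.c_base[of "Pre M P"] by auto
next
  case (Res j P) then show ?case using Comp.c_base[of "Res j P"] by auto
next
  case (Par P Q)
  then consider "np P = 1" "np Q = 0" | "np P = 0" "np Q = 1" by (force simp: add_is_1)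
  then show ?case
  proof cases
    case 1 then obtain X C where "Comp P X C" "np X = 0" using Par by auto
    then show ?thesis using 1 by (intro exI[of _ "Par X Q"] exI[of _ C]) (auto intro: Comp.c_parL)
  next
    case 2 then obtain X C where "Comp Q X C" "np X = 0" using Par by auto
    then show ?thesis using 2 by (intro exI[of _ "Par P X"] exI[of _ C]) (auto intro: Comp.c_parR)
  qed
qed

definition CI :: "proc \<Rightarrow> proc \<Rightarrow> bool" where
  "CI P Q \<longleftrightarrow> (\<forall>X C. Comp P X C \<longrightarrow> (\<exists>X' C'. Comp Q X' C' \<and> geq X X' \<and> geq C C'))"

lemma CI_trans: "CI P Q \<Longrightarrow> CI Q R \<Longrightarrow> CI P R"
  unfolding CI_def by (meson geq_trans)
lemma CI_refl: "CI P P" unfolding CI_def using geq_refl by blast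

lemma ci_sp: assumes "scong P Q" "np Q = 1" shows "CI P Q"
  unfolding CI_def
proof (intro allI impI)
  fix X C assume c: "Comp P X C"
  have s: "scong P (Par X C)" "np C = 1" "np P = np X + np C" using comp_sound[OF c] by auto
  have "np P = 1" using assms scong_inv_nat by auto
  then have x0: "np X = 0" using s by auto
  obtain X' C' where c': "Comp Q X' C'" "np X' = 0" using comp_exists assms(2) by blast
  have s': "scong Q (Par X' C')" using comp_sound[OF c'(1)] by auto
  have "geq X X'" using x0 c'(2) unfolding geq_def
    by (meson deep0_er np0_deep sc_sym sc_trans)
  moreover have "geq C C'"
  proof -
    have "geq C (Par X C)" by (rule geq_sym, rule geq_garbL, rule np0_deep, fact x0)
    also have "geq \<dots> P" by (rule scong_geq, rule sc_sym, fact s(1))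
    also have "geq \<dots> Q" by (rule scong_geq, fact assms(1))
    also have "geq \<dots> (Par X' C')" by (rule scong_geq, fact s')
    also have "geq \<dots> C'" by (rule geq_garbL, rule np0_deep, fact c'(2))
    finally show ?thesis .
  qed
  ultimately show "\<exists>X' C'. Comp Q X' C' \<and> geq X X' \<and> geq C C'" using c'(1) by blast
qed

lemma comp_not_base: "Comp P X C \<Longrightarrow> np P \<noteq> 1 \<Longrightarrow> P = Res j P' \<Longrightarrow>
   (\<exists>X1. Comp P' X1 C \<and> X = Res j X1 \<and> j \<notin> fn C) \<or> (\<exists>C1. Comp P' X C1 \<and> C = Res j C1 \<and> j \<notin> fn X)"
  by (erule Comp.cases) auto

lemma comp_Res_cases:
  assumes "Comp (Res j P) X C"
  obtains (base) "X = Nil" "C = Res j P" "np P = 1"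
    | (rx) X1 where "X = Res j X1" "Comp P X1 C" "j \<notin> fn C"
    | (rc) C1 where "C = Res j C1" "Comp P X C1" "j \<notin> fn X"
  using assms by (rule comp_ResE) auto

lemma comp_Par_cases:
  assumes "Comp (Par P Q) X C"
  obtains (l) X1 where "X = Par X1 Q" "Comp P X1 C"
    | (r) X1 where "X = Par P X1" "Comp Q X1 C"
  using assms by (rule comp_ParE) auto

lemma ci_res_m: assumes ci: "CI P Q" and np: "np P \<noteq> 1" shows "CI (Res n P) (Res n Q)"
  unfolding CI_def
proof (intro allI impI)
  fix X C assume c: "Comp (Res n P) X C"
  show "\<exists>X' C'. Comp (Res n Q) X' C' \<and> geq X X' \<and> geq C C'"
    using c
  proof (cases rule: comp_Res_cases)
    case base then show ?thesis using np by simp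
  next
    case (rx X1)
    then obtain X1' C' where h: "Comp Q X1' C'" "geq X1 X1'" "geq C C'" using ci unfolding CI_def by blast
    have "n \<notin> fn C'" using rx h geq_fn by auto
    then have "Comp (Res n Q) (Res n X1') C'" using h by (simp add: c_resX)
    then show ?thesis using h rx by (auto intro: geq_res)
  next
    case (rc C1)
    then obtain X' C1' where h: "Comp Q X' C1'" "geq X X'" "geq C1 C1'" using ci unfolding CI_def by blast
    have "n \<notin> fn X'" using rc h geq_fn by auto
    then have "Comp (Res n Q) X' (Res n C1')" using h by (simp add: c_resC)
    then show ?thesis using h rc by (auto intro: geq_res)
  qed
qed

lemma ci_par: assumes c1: "CI P P'" and c2: "CI Q Q'" and s1: "scong P P'" and s2: "scong Q Q'"
  shows "CI (Par P Q) (Par P' Q')"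
  unfolding CI_def
proof (intro allI impI)
  fix X C assume c: "Comp (Par P Q) X C"
  show "\<exists>X' C'. Comp (Par P' Q') X' C' \<and> geq X X' \<and> geq C C'"
    using c
  proof (cases rule: comp_Par_cases)
    case (l X1)
    then obtain X1' C' where h: "Comp P' X1' C'" "geq X1 X1'" "geq C C'" using c1 unfolding CI_def by blast
    have "Comp (Par P' Q') (Par X1' Q') C'" using h(1) by (rule c_parL)
    moreover have "geq X (Par X1' Q')" using l h s2 by (simp add: geq_par scong_geq)
    ultimately show ?thesis using h by blast
  next
    case (r X1)
    then obtain X1' C' where h: "Comp Q' X1' C'" "geq X1 X1'" "geq C C'" using c2 unfolding CI_def by blast
    have "Comp (Par P' Q') (Par P' X1') C'" using h(1) by (rule c_parR)
    moreover have "geq X (Par P' X1')" using r h s1 by (simp add: geq_par scong_geq)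
    ultimately show ?thesis using h by blast
  qed
qed

lemma ci_comm: "CI (Par P Q) (Par Q P)"
  unfolding CI_def
proof (intro allI impI)
  fix X C assume c: "Comp (Par P Q) X C"
  show "\<exists>X' C'. Comp (Par Q P) X' C' \<and> geq X X' \<and> geq C C'"
    using c
  proof (cases rule: comp_Par_cases)
    case (l X1)
    then have "Comp (Par Q P) (Par Q X1) C" by (simp add: c_parR)
    then show ?thesis using l by (meson geq_refl sc_comm scong_geq)
  next
    case (r X1)
    then have "Comp (Par Q P) (Par X1 P) C" by (simp add: c_parL)
    then show ?thesis using r by (meson geq_refl sc_comm scong_geq)
  qed
qed

lemma ci_assoc1: "CI (Par (Par P Q) R) (Par P (Par Q R))"
  unfolding CI_def
proof (intro allI impI)
  fix X C assume c: "Comp (Par (Par P Q) R) X C"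
  show "\<exists>X' C'. Comp (Par P (Par Q R)) X' C' \<and> geq X X' \<and> geq C C'"
    using c
  proof (cases rule: comp_Par_cases)
    case (l X1)
    from l(2) show ?thesis
    proof (cases rule: comp_Par_cases)
      case (l X2)
      then have "Comp (Par P (Par Q R)) (Par X2 (Par Q R)) C" by (simp add: c_parL)
      moreover have "geq X (Par X2 (Par Q R))" using \<open>X = Par X1 R\<close> l by (simp add: sc_assoc scong_geq)
      ultimately show ?thesis using geq_refl by blast
    next
      case (r X2)
      then have "Comp (Par P (Par Q R)) (Par P (Par X2 R)) C" by (simp add: c_parL c_parR)
      moreover have "geq X (Par P (Par X2 R))" using \<open>X = Par X1 R\<close> r by (simp add: sc_assoc scong_geq)
      ultimately show ?thesis using geq_refl by blast
    qed
  next
    case (r X1)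
    then have "Comp (Par P (Par Q R)) (Par P (Par Q X1)) C" by (simp add: c_parR)
    moreover have "geq X (Par P (Par Q X1))" using r by (simp add: sc_assoc scong_geq)
    ultimately show ?thesis using geq_refl by blast
  qed
qed

lemma ci_assoc2: "CI (Par P (Par Q R)) (Par (Par P Q) R)"
  unfolding CI_def
proof (intro allI impI)
  fix X C assume c: "Comp (Par P (Par Q R)) X C"
  show "\<exists>X' C'. Comp (Par (Par P Q) R) X' C' \<and> geq X X' \<and> geq C C'"
    using c
  proof (cases rule: comp_Par_cases)
    case (l X1)
    then have "Comp (Par (Par P Q) R) (Par (Par X1 Q) R) C" by (simp add: c_parL)
    moreover have "geq X (Par (Par X1 Q) R)" using l by (simp add: sc_assoc' scong_geq)
    ultimately show ?thesis using geq_refl by blast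
  next
    case (r X1)
    from r(2) show ?thesis
    proof (cases rule: comp_Par_cases)
      case (l X2)
      then have "Comp (Par (Par P Q) R) (Par (Par P X2) R) C" by (simp add: c_parL c_parR)
      moreover have "geq X (Par (Par P X2) R)" using \<open>X = Par P X1\<close> l by (simp add: sc_assoc' scong_geq)
      ultimately show ?thesis using geq_refl by blast
    next
      case (r X2)
      then have "Comp (Par (Par P Q) R) (Par (Par P Q) X2) C" by (simp add: c_parR)
      moreover have "geq X (Par (Par P Q) X2)" using \<open>X = Par P X1\<close> r by (simp add: sc_assoc' scong_geq)
      ultimately show ?thesis using geq_refl by blast
    qed
  qed
qed

lemma ci_nil1: "CI (Par P Nil) P"
  unfolding CI_def
proof (intro allI impI)
  fix X C assume c: "Comp (Par P Nil) X C"
  show "\<exists>X' C'. Comp P X' C' \<and> geq X X' \<and> geq C C'"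
    using c
  proof (cases rule: comp_Par_cases)
    case (l X1)
    then show ?thesis by (meson geq_refl sc_nil scong_geq)
  next
    case (r X1)
    then show ?thesis using comp_np by fastforce
  qed
qed

lemma ci_nil2: "CI P (Par P Nil)"
  unfolding CI_def
proof (intro allI impI)
  fix X C assume c: "Comp P X C"
  then have "Comp (Par P Nil) (Par X Nil) C" by (rule c_parL)
  then show "\<exists>X' C'. Comp (Par P Nil) X' C' \<and> geq X X' \<and> geq C C'"
    by (meson geq_refl sc_nil' scong_geq)
qed

lemma geq_resres: "geq (Res n (Res m P)) (Res m (Res n P))"
  by (rule scong_geq, rule sc_res_res)

lemma ci_resres: assumes np: "np P \<noteq> 1" shows "CI (Res n (Res m P)) (Res m (Res n P))"
  unfolding CI_def
proof (intro allI impI)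
  fix X C assume c: "Comp (Res n (Res m P)) X C"
  show "\<exists>X' C'. Comp (Res m (Res n P)) X' C' \<and> geq X X' \<and> geq C C'"
  proof (cases "n = m")
    case True then show ?thesis using c geq_refl by blast
  next
    case nm: False
    from c show ?thesis
    proof (cases rule: comp_Res_cases)
      case base then show ?thesis using np by simp
    next
      case (rx X1)
      from rx(2) show ?thesis
      proof (cases rule: comp_Res_cases)
        case base then show ?thesis using np by simp
      next
        case (rx X2)
        have "Comp (Res m (Res n P)) (Res m (Res n X2)) C"
          using rx \<open>n \<notin> fn C\<close> by (intro c_resX) auto
        moreover have "geq X (Res m (Res n X2))" using \<open>X = Res n X1\<close> rx by (simp add: geq_resres)
        ultimately show ?thesis using geq_refl by blast
      next
        case (rc C1)
        have "n \<notin> fn C1" using rx rc nm by auto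
        then have "Comp (Res n P) (Res n X1) C1" using rc by (intro c_resX) auto
        then have "Comp (Res m (Res n P)) (Res n X1) (Res m C1)" using rc by (intro c_resC) auto
        then show ?thesis using rx rc geq_refl by blast
      qed
    next
      case (rc C1)
      note outer = rc
      from rc(2) show ?thesis
      proof (cases rule: comp_Res_cases)
        case base then show ?thesis using np by simp
      next
        case (rx X1)
        have "n \<notin> fn X1" using rx rc nm by auto
        then have "Comp (Res n P) X1 (Res n C1)" using rx by (intro c_resC) auto
        then have "Comp (Res m (Res n P)) (Res m X1) (Res n C1)" using rx by (intro c_resX) auto
        then show ?thesis using rx rc geq_refl by blast
      next
        case (rc C2)
        have "Comp (Res m (Res n P)) X (Res m (Res n C2))"
          using rc outer by (intro c_resC) auto
        moreover have "geq C (Res m (Res n C2))" using rc outer by (simp add: geq_resres)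
        ultimately show ?thesis using geq_refl by blast
      qed
    qed
  qed
qed

lemma ci_respar1: assumes nP: "n \<notin> fn P" and np: "np (Par P Q) \<noteq> 1"
  shows "CI (Res n (Par P Q)) (Par P (Res n Q))"
  unfolding CI_def
proof (intro allI impI)
  fix X C assume c: "Comp (Res n (Par P Q)) X C"
  from c show "\<exists>X' C'. Comp (Par P (Res n Q)) X' C' \<and> geq X X' \<and> geq C C'"
  proof (cases rule: comp_Res_cases)
    case base then show ?thesis using np by simp
  next
    case (rx X1)
    from rx(2) show ?thesis
    proof (cases rule: comp_Par_cases)
      case (l X2)
      have "n \<notin> fn X2" using comp_sound[OF l(2)] nP by auto
      have "Comp (Par P (Res n Q)) (Par X2 (Res n Q)) C" using l by (simp add: c_parL)
      moreover have "geq X (Par X2 (Res n Q))" using rx l \<open>n \<notin> fn X2\<close>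
        by (simp add: scong_geq sc_res_par)
      ultimately show ?thesis using geq_refl by blast
    next
      case (r X2)
      have "Comp (Par P (Res n Q)) (Par P (Res n X2)) C" using r rx by (simp add: c_parR c_resX)
      moreover have "geq X (Par P (Res n X2))" using rx r nP
        by (simp add: scong_geq sc_res_par)
      ultimately show ?thesis using geq_refl by blast
    qed
  next
    case (rc C1)
    from rc(2) show ?thesis
    proof (cases rule: comp_Par_cases)
      case (l X2)
      have nC1: "n \<notin> fn C1" using comp_sound[OF l(2)] nP by auto
      have nQ: "n \<notin> fn Q" using rc l by auto
      have "Comp (Par P (Res n Q)) (Par X2 (Res n Q)) C1" using l by (simp add: c_parL)
      moreover have "geq X (Par X2 (Res n Q))" using l nQ by (simp add: geq_def sc_refl)
      moreover have "geq C C1" using rc nC1 by (simp add: geq_def sc_refl)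
      ultimately show ?thesis by blast
    next
      case (r X2)
      have "Comp (Par P (Res n Q)) (Par P X2) (Res n C1)" using r rc by (simp add: c_parR c_resC)
      then show ?thesis using r rc geq_refl by blast
    qed
  qed
qed

lemma ci_respar2: assumes nP: "n \<notin> fn P"
  shows "CI (Par P (Res n Q)) (Res n (Par P Q))"
  unfolding CI_def
proof (intro allI impI)
  fix X C assume c: "Comp (Par P (Res n Q)) X C"
  from c show "\<exists>X' C'. Comp (Res n (Par P Q)) X' C' \<and> geq X X' \<and> geq C C'"
  proof (cases rule: comp_Par_cases)
    case (l X1)
    have nC: "n \<notin> fn C" "n \<notin> fn X1" using comp_sound[OF l(2)] nP by auto
    have "Comp (Res n (Par P Q)) (Res n (Par X1 Q)) C" using l nC by (simp add: c_parL c_resX)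
    moreover have "geq X (Res n (Par X1 Q))" using l nC
      by (simp add: scong_geq sc_res_par sc_sym)
    ultimately show ?thesis using geq_refl by blast
  next
    case (r X1)
    from r(2) show ?thesis
    proof (cases rule: comp_Res_cases)
      case base
      obtain X3 C3 where h: "Comp Q X3 C3" "np X3 = 0" using comp_exists base by blast
      have fX3: "fn X3 = {}" using h np0_deep deep0_fn by blast
      have "Comp (Res n (Par P Q)) (Par P X3) (Res n C3)" using h nP fX3 by (simp add: c_parR c_resC)
      moreover have "geq X (Par P X3)"
      proof -
        have "geq Nil X3" using h(2) unfolding geq_def by (simp add: sc_sym deep0_er np0_deep)
        then show ?thesis using r base by (simp add: geq_par)
      qed
      moreover have "geq C (Res n C3)"
      proof -
        have "geq Q (Par X3 C3)" using comp_sound[OF h(1)] scong_geq by blast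
        also have "geq \<dots> C3" using h np0_deep geq_garbL by blast
        finally show ?thesis using base by (simp add: geq_res)
      qed
      ultimately show ?thesis by blast
    next
      case (rx X2)
      have "Comp (Res n (Par P Q)) (Res n (Par P X2)) C" using rx by (simp add: c_parR c_resX)
      moreover have "geq X (Res n (Par P X2))" using r rx nP
        by (simp add: scong_geq sc_res_par sc_sym)
      ultimately show ?thesis using geq_refl by blast
    next
      case (rc C1)
      have "Comp (Res n (Par P Q)) (Par P X1) (Res n C1)" using rc nP by (simp add: c_parR c_resC)
      then show ?thesis using r rc geq_refl by blast
    qed
  qed
qed

lemma ci_alpha: assumes mP: "m \<notin> fn P" and np: "np P \<noteq> 1"
  shows "CI (Res n P) (Res m (swap n m P))"
  unfolding CI_def
proof (intro allI impI)
  fix X C assume c: "Comp (Res n P) X C"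
  from c show "\<exists>X' C'. Comp (Res m (swap n m P)) X' C' \<and> geq X X' \<and> geq C C'"
  proof (cases rule: comp_Res_cases)
    case base then show ?thesis using np by simp
  next
    case (rx X1)
    have f: "fn P = fn X1 \<union> fn C" using comp_sound[OF rx(2)] by auto
    have "Comp (swap n m P) (swap n m X1) (swap n m C)" using rx by (simp add: comp_swap)
    moreover have "m \<notin> fn (swap n m C)" using rx by (auto simp: swp_def split: if_splits)
    ultimately have "Comp (Res m (swap n m P)) (Res m (swap n m X1)) (swap n m C)" by (rule c_resX)
    moreover have "geq X (Res m (swap n m X1))" using rx f mP by (simp add: scong_geq sc_alpha)
    moreover have "geq C (swap n m C)"
    proof -
      have "scong (swap n m C) C" using rx f mP by (intro swap_fresh) auto
      then show ?thesis by (simp add: scong_geq sc_sym)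
    qed
    ultimately show ?thesis by blast
  next
    case (rc C1)
    have f: "fn P = fn X \<union> fn C1" using comp_sound[OF rc(2)] by auto
    have "Comp (swap n m P) (swap n m X) (swap n m C1)" using rc by (simp add: comp_swap)
    moreover have "m \<notin> fn (swap n m X)" using rc by (auto simp: swp_def split: if_splits)
    ultimately have "Comp (Res m (swap n m P)) (swap n m X) (Res m (swap n m C1))" by (rule c_resC)
    moreover have "geq C (Res m (swap n m C1))" using rc f mP by (simp add: scong_geq sc_alpha)
    moreover have "geq X (swap n m X)"
    proof -
      have "scong (swap n m X) X" using rc f mP by (intro swap_fresh) auto
      then show ?thesis by (simp add: scong_geq sc_sym)
    qed
    ultimately show ?thesis by blast
  qed
qed

lemma ci_sp2: "scong P Q \<Longrightarrow> np P = 1 \<Longrightarrow> CI P Q \<and> CI Q P"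
  using ci_sp[of P Q] ci_sp[of Q P] scong_inv_nat[of P Q] sc_sym[of P Q] by auto

lemma comp_inv: "scong P Q \<Longrightarrow> CI P Q \<and> CI Q P"
proof (induction rule: scong.induct)
  case (sc_refl P) then show ?case using CI_refl by blast
next
  case (sc_sym P Q) then show ?case by blast
next
  case (sc_trans P Q R) then show ?case using CI_trans by blast
next
  case (sc_amb P Q n) then show ?case using ci_sp2[OF scong.sc_amb[OF sc_amb(1)]] by simp
next
  case (sc_pre P Q M) then show ?case using ci_sp2[OF scong.sc_pre[OF sc_pre(1)]] by simp
next
  case (sc_res P Q n)
  show ?case
  proof (cases "np P = 1")
    case True then show ?thesis using ci_sp2[OF scong.sc_res[OF sc_res(1)]] by simp
  next
    case False
    then have "np Q \<noteq> 1" using scong_inv_nat[OF sc_res(1)] by simp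
    then show ?thesis using sc_res.IH False ci_res_m by blast
  qed
next
  case (sc_par P P' Q Q') then show ?case using ci_par sc_sym by blast
next
  case (sc_par_comm P Q) then show ?case using ci_comm by blast
next
  case (sc_par_assoc P Q R) then show ?case using ci_assoc1 ci_assoc2 by blast
next
  case (sc_par_nil P) then show ?case using ci_nil1 ci_nil2 by blast
next
  case (sc_res_res n m P)
  show ?case
  proof (cases "np P = 1")
    case True then show ?thesis using ci_sp2[OF scong.sc_res_res] by simp
  next
    case False then show ?thesis using ci_resres by blast
  qed
next
  case (sc_res_par n P Q)
  show ?case
  proof (cases "np (Par P Q) = 1")
    case True then show ?thesis using ci_sp2[OF scong.sc_res_par[OF sc_res_par]] by simp
  next
    case False then show ?thesis using ci_respar1 ci_respar2 sc_res_par by blast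
  qed
next
  case (sc_res_amb n m P) then show ?case using ci_sp2[OF scong.sc_res_amb[OF sc_res_amb]] by simp
next
  case (sc_res_pre n M P) then show ?case using ci_sp2[OF scong.sc_res_pre[OF sc_res_pre]] by simp
next
  case (sc_alpha m P n)
  show ?case
  proof (cases "np P = 1")
    case True then show ?thesis using ci_sp2[OF scong.sc_alpha[OF sc_alpha]] by simp
  next
    case False
    show ?thesis
    proof (cases "n = m")
      case True then show ?thesis using CI_refl by simp
    next
      case nm: False
      have "n \<notin> fn (swap n m P)" using sc_alpha nm by (auto simp: swp_def split: if_splits)
      moreover have "np (swap n m P) \<noteq> 1" using False by simp
      ultimately have "CI (Res m (swap n m P)) (Res n (swap m n (swap n m P)))" by (rule ci_alpha)
      moreover have "swap m n (swap n m P) = P" by (simp add: swap_sym[of m n])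
      ultimately show ?thesis using ci_alpha[OF sc_alpha False] by simp
    qed
  qed
qed

lemma comp_transfer: "scong P Q \<Longrightarrow> Comp P X C \<Longrightarrow> \<exists>X' C'. Comp Q X' C' \<and> geq X X' \<and> geq C C'"
  using comp_inv unfolding CI_def by blast

definition perm :: "(name \<times> name) list \<Rightarrow> proc \<Rightarrow> proc" where
  "perm ps P = foldl (\<lambda>P (a, b). swap a b P) P ps"

lemma perm_Nil[simp]: "perm [] P = P" by (simp add: perm_def)
lemma perm_snoc[simp]: "perm (ps @ [(a, b)]) P = swap a b (perm ps P)" by (simp add: perm_def)
lemma perm_Cons: "perm ((a, b) # ps) P = perm ps (swap a b P)" by (simp add: perm_def)

lemma perm_Par[simp]: "perm ps (Par P Q) = Par (perm ps P) (perm ps Q)"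
  by (induction ps arbitrary: P Q) (auto simp: perm_Cons)
lemma perm_Amb: "\<forall>(a, b)\<in>set ps. k \<noteq> a \<and> k \<noteq> b \<Longrightarrow> perm ps (Amb k P) = Amb k (perm ps P)"
  by (induction ps arbitrary: P) (auto simp: perm_Cons)
lemma perm_Open: "\<forall>(a, b)\<in>set ps. k \<noteq> a \<and> k \<noteq> b \<Longrightarrow> perm ps (Pre (Open k) P) = Pre (Open k) (perm ps P)"
  by (induction ps arbitrary: P) (auto simp: perm_Cons)
lemma perm_fresh: "\<forall>(a, b)\<in>set ps. a \<notin> fn T \<and> b \<notin> fn T \<Longrightarrow> scong (perm ps T) T"
proof (induction ps arbitrary: T)
  case Nil then show ?case by (simp add: sc_refl)
next
  case (Cons p ps)
  obtain a b where p: "p = (a, b)" by force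
  have s: "scong (swap a b T) T" using Cons.prems p by (intro swap_fresh) auto
  have "fn (swap a b T) = fn T" using scong_fn[OF s] .
  then have "scong (perm ps (swap a b T)) (swap a b T)" using Cons by auto
  then show ?case using s p by (simp add: perm_Cons sc_trans)
qed

lemma swap_resl: "swap a b (resl A P) = resl (map (swp a b) A) (swap a b P)"
  by (induction A) auto
lemma map_swp_id: "a \<notin> set A \<Longrightarrow> b \<notin> set A \<Longrightarrow> map (swp a b) A = A"
  by (induction A) auto

lemma rename_gen: "finite F \<Longrightarrow> \<exists>A' ps. set A' \<inter> F = {} \<and>
   (\<forall>D. fn D \<subseteq> F \<longrightarrow> scong (resl A D) (resl A' (perm ps D))) \<and>
   (\<forall>(a, b)\<in>set ps. a \<in> set A \<and> b \<notin> F)"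
proof (induction A arbitrary: F)
  case Nil have "\<forall>D. scong D D" by (simp add: sc_refl)
  then show ?case by (intro exI[of _ "[]"] exI[of _ "[]"]) simp
next
  case (Cons a A)
  have "finite (insert a F)" using Cons.prems by simp
  then obtain b0 where "b0 \<notin> insert a F" using ex_new_if_finite[OF infinite_UNIV_nat] by blast
  then obtain b where b: "b \<notin> F" "b \<noteq> a" by blast
  define F' where "F' = insert a (insert b F)"
  have fF': "finite F'" using Cons.prems by (simp add: F'_def)
  from Cons.IH[OF fF'] obtain A' ps where h: "set A' \<inter> F' = {}"
     "\<forall>D. fn D \<subseteq> F' \<longrightarrow> scong (resl A D) (resl A' (perm ps D))"
     "\<forall>(a', b')\<in>set ps. a' \<in> set A \<and> b' \<notin> F'" by (elim exE conjE)
  have abA: "a \<notin> set A'" "b \<notin> set A'" using h(1) by (auto simp: F'_def)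
  show ?case
  proof (intro exI[of _ "b # A'"] exI[of _ "ps @ [(a, b)]"] conjI allI impI)
    show "set (b # A') \<inter> F = {}" using h(1) b by (auto simp: F'_def)
  next
    fix D assume fD: "fn D \<subseteq> F"
    then have fD': "fn D \<subseteq> F'" by (auto simp: F'_def)
    have s1: "scong (resl A D) (resl A' (perm ps D))" using h(2) fD' by blast
    have "b \<notin> fn (resl A' (perm ps D))" using scong_fn[OF s1] fD b by auto
    then have s2: "scong (Res a (resl A' (perm ps D))) (Res b (swap a b (resl A' (perm ps D))))"
      by (rule sc_alpha)
    have "scong (resl (a # A) D) (Res a (resl A' (perm ps D)))" using s1 by (simp add: sc_res)
    also have "scong \<dots> (Res b (swap a b (resl A' (perm ps D))))" by (fact s2)
    also have "Res b (swap a b (resl A' (perm ps D))) = resl (b # A') (perm (ps @ [(a, b)]) D)"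
      using abA by (simp add: swap_resl map_swp_id)
    finally show "scong (resl (a # A) D) (resl (b # A') (perm (ps @ [(a, b)]) D))" .
  next
    show "\<forall>(a', b')\<in>set (ps @ [(a, b)]). a' \<in> set (a # A) \<and> b' \<notin> F"
      using h(3) b by (auto simp: F'_def)
  qed
qed

lemma shape1_rename:
  assumes "finite F" "k \<notin> set A" "set A \<inter> fn B = {}"
  shows "\<exists>A' P1' P2'. scong (resl A (Par (Amb k P1) P2)) (resl A' (Par (Amb k P1') P2')) \<and>
     scong (resl A (Par (Par P1 B) P2)) (resl A' (Par (Par P1' B) P2')) \<and> set A' \<inter> F = {}"
proof -
  define F' where "F' = F \<union> fn (Par (Amb k P1) P2) \<union> fn B"
  have fF': "finite F'" using assms by (simp add: F'_def)
  from rename_gen[OF fF', of A] obtain A' ps where h: "set A' \<inter> F' = {}"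
     "\<forall>D. fn D \<subseteq> F' \<longrightarrow> scong (resl A D) (resl A' (perm ps D))"
     "\<forall>(a, b)\<in>set ps. a \<in> set A \<and> b \<notin> F'" by (elim exE conjE)
  have fixk: "\<forall>(a, b)\<in>set ps. k \<noteq> a \<and> k \<noteq> b" using h(3) assms(2) by (auto simp: F'_def)
  have fB: "\<forall>(a, b)\<in>set ps. a \<notin> fn B \<and> b \<notin> fn B" using h(3) assms(3) by (auto simp: F'_def)
  have s1: "scong (resl A (Par (Amb k P1) P2)) (resl A' (Par (Amb k (perm ps P1)) (perm ps P2)))"
  proof -
    have "fn (Par (Amb k P1) P2) \<subseteq> F'" by (auto simp: F'_def)
    then have "scong (resl A (Par (Amb k P1) P2)) (resl A' (perm ps (Par (Amb k P1) P2)))"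
      using h(2) by blast
    then show ?thesis using fixk by (simp add: perm_Amb)
  qed
  have "scong (resl A (Par (Par P1 B) P2)) (resl A' (Par (Par (perm ps P1) (perm ps B)) (perm ps P2)))"
  proof -
    have "fn (Par (Par P1 B) P2) \<subseteq> F'" by (auto simp: F'_def)
    then have "scong (resl A (Par (Par P1 B) P2)) (resl A' (perm ps (Par (Par P1 B) P2)))"
      using h(2) by blast
    then show ?thesis by simp
  qed
  also have "scong \<dots> (resl A' (Par (Par (perm ps P1) B) (perm ps P2)))"
    using perm_fresh[OF fB] by (intro resl_cong sc_parL sc_parR)
  finally show ?thesis using s1 h(1) by (auto simp: F'_def)
qed

lemma shape2_rename:
  assumes "finite F" "m \<notin> set A" "set A \<inter> fn S = {}"
  shows "\<exists>A' Z' R'. scong (resl A (Par Z (Pre (Open m) R))) (resl A' (Par Z' (Pre (Open m) R'))) \<and>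
     scong (resl A (Par Z (Par R S))) (resl A' (Par Z' (Par R' S))) \<and> set A' \<inter> F = {}"
proof -
  define F' where "F' = F \<union> fn (Par Z (Pre (Open m) R)) \<union> fn S"
  have fF': "finite F'" using assms by (simp add: F'_def)
  from rename_gen[OF fF', of A] obtain A' ps where h: "set A' \<inter> F' = {}"
     "\<forall>D. fn D \<subseteq> F' \<longrightarrow> scong (resl A D) (resl A' (perm ps D))"
     "\<forall>(a, b)\<in>set ps. a \<in> set A \<and> b \<notin> F'" by (elim exE conjE)
  have fixk: "\<forall>(a, b)\<in>set ps. m \<noteq> a \<and> m \<noteq> b" using h(3) assms(2) by (auto simp: F'_def)
  have fB: "\<forall>(a, b)\<in>set ps. a \<notin> fn S \<and> b \<notin> fn S" using h(3) assms(3) by (auto simp: F'_def)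
  have s1: "scong (resl A (Par Z (Pre (Open m) R))) (resl A' (Par (perm ps Z) (Pre (Open m) (perm ps R))))"
  proof -
    have "fn (Par Z (Pre (Open m) R)) \<subseteq> F'" by (auto simp: F'_def)
    then have "scong (resl A (Par Z (Pre (Open m) R))) (resl A' (perm ps (Par Z (Pre (Open m) R))))"
      using h(2) by blast
    then show ?thesis using fixk by (simp add: perm_Open)
  qed
  have "scong (resl A (Par Z (Par R S))) (resl A' (Par (perm ps Z) (Par (perm ps R) (perm ps S))))"
  proof -
    have "fn (Par Z (Par R S)) \<subseteq> F'" by (auto simp: F'_def)
    then have "scong (resl A (Par Z (Par R S))) (resl A' (perm ps (Par Z (Par R S))))"
      using h(2) by blast
    then show ?thesis by simp
  qed
  also have "scong \<dots> (resl A' (Par (perm ps Z) (Par (perm ps R) S)))"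
    using perm_fresh[OF fB] by (intro resl_cong sc_parL sc_parR)
  finally show ?thesis using s1 h(1) by (auto simp: F'_def)
qed

lemma shape0_rename:
  assumes "finite F" "m \<notin> set A"
  shows "\<exists>A' Q' R'. scong (resl A (Par (Amb m Q) R)) (resl A' (Par (Amb m Q') R')) \<and> set A' \<inter> F = {}"
proof -
  define F' where "F' = F \<union> fn (Par (Amb m Q) R)"
  have fF': "finite F'" using assms by (simp add: F'_def)
  from rename_gen[OF fF', of A] obtain A' ps where h: "set A' \<inter> F' = {}"
     "\<forall>D. fn D \<subseteq> F' \<longrightarrow> scong (resl A D) (resl A' (perm ps D))"
     "\<forall>(a, b)\<in>set ps. a \<in> set A \<and> b \<notin> F'" by (elim exE conjE)
  have fixk: "\<forall>(a, b)\<in>set ps. m \<noteq> a \<and> m \<noteq> b" using h(3) assms(2) by (auto simp: F'_def)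
  have "fn (Par (Amb m Q) R) \<subseteq> F'" by (auto simp: F'_def)
  then have "scong (resl A (Par (Amb m Q) R)) (resl A' (perm ps (Par (Amb m Q) R)))"
    using h(2) by blast
  then show ?thesis using fixk h(1) by (auto simp: perm_Amb F'_def)
qed

lemma barb_tops: "barb P m \<Longrightarrow> m \<in> tops P"
proof -
  assume "barb P m"
  then obtain A Q R where "scong P (resl A (Par (Amb m Q) R))" "m \<notin> set A" by (auto simp: barb_def)
  moreover have "tops (resl A D) = tops D - set A" for D by (induction A) auto
  ultimately show ?thesis using scong_tops by fastforce
qed

lemma tops_barb: "m \<in> tops P \<Longrightarrow> barb P m"
proof (induction P)
  case (Amb k P)
  then have "scong (Amb k P) (resl [] (Par (Amb m P) Nil))" by (simp add: sc_nil')
  then show ?case unfolding barb_def by (metis empty_iff empty_set)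
next
  case (Res j P)
  then obtain A Q R where "scong P (resl A (Par (Amb m Q) R))" "m \<notin> set A" "j \<noteq> m"
    by (auto simp: barb_def)
  then have "scong (Res j P) (resl (j # A) (Par (Amb m Q) R))" "m \<notin> set (j # A)" by (auto simp: sc_res)
  then show ?case unfolding barb_def by blast
next
  case (Par P1 P2)
  show ?case
  proof (cases "m \<in> tops P1")
    case True
    then obtain A Q R where h: "scong P1 (resl A (Par (Amb m Q) R))" "m \<notin> set A"
      using Par by (auto simp: barb_def)
    obtain A' Q' R' where h2: "scong (resl A (Par (Amb m Q) R)) (resl A' (Par (Amb m Q') R'))"
      "set A' \<inter> insert m (fn P2) = {}" using shape0_rename[where F="insert m (fn P2)" and A=A and m=m and Q=Q and R=R] h(2) by auto
    have "scong (Par P1 P2) (Par (resl A' (Par (Amb m Q') R')) P2)" using h h2 by (meson sc_parL sc_trans)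
    also have "scong \<dots> (resl A' (Par (Par (Amb m Q') R') P2))" using h2 by (intro resl_par) auto
    also have "scong \<dots> (resl A' (Par (Amb m Q') (Par R' P2)))" by (intro resl_cong sc_assoc)
    finally show ?thesis using h2 unfolding barb_def by blast
  next
    case False
    then have "m \<in> tops P2" using Par by auto
    then obtain A Q R where h: "scong P2 (resl A (Par (Amb m Q) R))" "m \<notin> set A"
      using Par by (auto simp: barb_def)
    obtain A' Q' R' where h2: "scong (resl A (Par (Amb m Q) R)) (resl A' (Par (Amb m Q') R'))"
      "set A' \<inter> insert m (fn P1) = {}" using shape0_rename[where F="insert m (fn P1)" and A=A and m=m and Q=Q and R=R] h(2) by auto
    have "scong (Par P1 P2) (Par (resl A' (Par (Amb m Q') R')) P1)" using h h2 by (meson sc_comm sc_parL sc_trans)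
    also have "scong \<dots> (resl A' (Par (Par (Amb m Q') R') P1))" using h2 by (intro resl_par) auto
    also have "scong \<dots> (resl A' (Par (Amb m Q') (Par R' P1)))" by (intro resl_cong sc_assoc)
    finally show ?thesis using h2 unfolding barb_def by blast
  qed
qed auto

inductive rn :: "proc \<Rightarrow> proc \<Rightarrow> bool" where
  rn_in: "rn (Par (Amb n (Par (Pre (In m) P) Q)) (Amb m R)) (Amb m (Par (Amb n (Par P Q)) R))"
| rn_out: "rn (Amb m (Par (Amb n (Par (Pre (Out m) P) Q)) R)) (Par (Amb n (Par P Q)) (Amb m R))"
| rn_open: "rn (Par (Pre (Open n) P) (Amb n Q)) (Par P Q)"
| rn_res: "rn P Q \<Longrightarrow> rn (Res n P) (Res n Q)"
| rn_amb: "rn P Q \<Longrightarrow> rn (Amb n P) (Amb n Q)"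
| rn_par: "rn P Q \<Longrightarrow> rn (Par P R) (Par Q R)"

lemma red_rn: "red P Q \<Longrightarrow> \<exists>P0 Q0. scong P P0 \<and> rn P0 Q0 \<and> scong Q0 Q"
proof (induction rule: red.induct)
  case (red_in n m P Q R) then show ?case using rn.rn_in sc_refl by blast
next
  case (red_out m n P Q R) then show ?case using rn.rn_out sc_refl by blast
next
  case (red_open n P Q) then show ?case using rn.rn_open sc_refl by blast
next
  case (red_res P Q n) then show ?case using rn.rn_res sc_res by blast
next
  case (red_amb P Q n) then show ?case using rn.rn_amb sc_amb by blast
next
  case (red_par P Q R) then show ?case using rn.rn_par sc_parL by blast
next
  case (red_scong P P' Q' Q) then show ?case using sc_trans by blast
qed

lemma rn_fn: "rn P Q \<Longrightarrow> fn Q \<subseteq> fn P" by (induction rule: rn.induct) auto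
lemma rn_ac: "rn P Q \<Longrightarrow> ac P \<ge> 1" by (induction rule: rn.induct) auto
lemma rn_deep: "rn P Q \<Longrightarrow> deep P \<ge> 2" by (induction rule: rn.induct) auto





lemma comp_leaf_Pre: "Comp (Pre M P) X C \<Longrightarrow> X = Nil \<and> C = Pre M P"
  by (erule comp_PreE) auto
lemma comp_leaf_Amb: "Comp (Amb k P) X C \<Longrightarrow> X = Nil \<and> C = Amb k P"
  by (erule comp_AmbE) auto

definition S1 :: "proc \<Rightarrow> proc \<Rightarrow> proc \<Rightarrow> bool" where
  "S1 X C Q0 \<longleftrightarrow> (\<exists>k A P1 P2 B. scong X (resl A (Par (Amb k P1) P2)) \<and> scong C (Pre (Open k) B) \<and>
      scong Q0 (resl A (Par (Par P1 B) P2)) \<and> k \<notin> set A \<and> set A \<inter> fn B = {})"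

lemma anal1: "rn P0 Q0 \<Longrightarrow> Comp P0 X C \<Longrightarrow> ac C = 0 \<Longrightarrow> m \<notin> fn X \<Longrightarrow> m \<notin> ugs P0 \<Longrightarrow>
   m \<in> tops Q0 \<Longrightarrow> S1 X C Q0"
proof (induction arbitrary: X C rule: rn.induct)
  case (rn_in n m' P Q R)
  then show ?case by auto
next
  case (rn_out m' n P Q R)
  then show ?case by auto
next
  case (rn_open k P Q)
  from rn_open.prems(1) show ?case
  proof (cases rule: comp_Par_cases)
    case (l X1)
    then have h: "X1 = Nil" "C = Pre (Open k) P" using comp_leaf_Pre by auto
    have "scong X (resl [] (Par (Amb k Q) Nil))" using l h by (simp add: sc_comm)
    moreover have "scong (Par P Q) (resl [] (Par (Par Q P) Nil))" using sc_comm sc_nil' sc_trans by fastforce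
    ultimately show ?thesis unfolding S1_def using h sc_refl by fastforce
  next
    case (r X1)
    then show ?thesis using comp_leaf_Amb rn_open.prems by fastforce
  qed
next
  case (rn_res P Q j)
  have jm: "j \<noteq> m" using rn_res.prems by auto
  have mQ: "m \<in> tops Q" using rn_res.prems by auto
  have mP: "m \<notin> ugs P" using rn_res.prems jm by auto
  from rn_res.prems(1) show ?case
  proof (cases rule: comp_Res_cases)
    case base then show ?thesis using rn_res.prems rn_ac[OF rn_res.hyps] by simp
  next
    case (rx X1)
    have "m \<notin> fn X1" using rx rn_res.prems jm by auto
    then obtain k A P1 P2 B where h: "scong X1 (resl A (Par (Amb k P1) P2))" "scong C (Pre (Open k) B)"
      "scong Q (resl A (Par (Par P1 B) P2))" "k \<notin> set A" "set A \<inter> fn B = {}"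
      using rn_res.IH[OF rx(2)] rn_res.prems mQ mP unfolding S1_def by blast
    have fC: "fn C = insert k (fn B)" using scong_fn[OF h(2)] by simp
    have "scong X (resl (j # A) (Par (Amb k P1) P2))" using rx h by (simp add: sc_res)
    moreover have "scong (Res j Q) (resl (j # A) (Par (Par P1 B) P2))" using h by (simp add: sc_res)
    moreover have "k \<notin> set (j # A)" "set (j # A) \<inter> fn B = {}" using h rx fC by auto
    ultimately show ?thesis unfolding S1_def using h by blast
  next
    case (rc C1)
    have "ac C1 = 0" using rc rn_res.prems by simp
    then obtain k A P1 P2 B where h: "scong X (resl A (Par (Amb k P1) P2))" "scong C1 (Pre (Open k) B)"
      "scong Q (resl A (Par (Par P1 B) P2))" "k \<notin> set A" "set A \<inter> fn B = {}"
      using rn_res.IH[OF rc(2)] rn_res.prems mQ mP unfolding S1_def by blast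
    have fX: "fn X = fn (resl A (Par (Amb k P1) P2))" using scong_fn[OF h(1)] .
    have jk: "j \<noteq> k" using fX rc h by auto
    obtain A' P1' P2' where r: "scong (resl A (Par (Amb k P1) P2)) (resl A' (Par (Amb k P1') P2'))"
      "scong (resl A (Par (Par P1 B) P2)) (resl A' (Par (Par P1' B) P2'))"
      "set A' \<inter> (insert j (insert k (fn B))) = {}"
      using shape1_rename[of "insert j (insert k (fn B))" k A B P1 P2] h
      by auto
    have fX': "fn X = fn (resl A' (Par (Amb k P1') P2'))" using fX scong_fn[OF r(1)] by simp
    have jP: "j \<notin> fn P1'" "j \<notin> fn P2'" using fX' rc r(3) by auto
    have "scong X (resl A' (Par (Amb k P1') P2'))" using h(1) r(1) by (rule sc_trans)
    moreover have "scong C (Pre (Open k) (Res j B))"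
    proof -
      have "scong C (Res j (Pre (Open k) B))" using rc h by (simp add: sc_res)
      also have "scong \<dots> (Pre (Open k) (Res j B))" using jk by (intro sc_res_pre) simp
      finally show ?thesis .
    qed
    moreover have "scong (Res j Q) (resl A' (Par (Par P1' (Res j B)) P2'))"
    proof -
      have "scong (Res j Q) (Res j (resl A' (Par (Par P1' B) P2')))"
        using h(3) r(2) by (meson sc_res sc_trans)
      also have "scong \<dots> (resl A' (Res j (Par (Par P1' B) P2')))" using r(3) by (intro res_resl) auto
      also have "scong \<dots> (resl A' (Par (Par P1' (Res j B)) P2'))"
      proof (rule resl_cong)
        have "scong (Res j (Par (Par P1' B) P2')) (Par (Res j (Par P1' B)) P2')" using jP(2) by (rule sc_res_parR)
        also have "scong \<dots> (Par (Par P1' (Res j B)) P2')" using jP(1) by (intro sc_parL sc_res_par)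
        finally show "scong (Res j (Par (Par P1' B) P2')) (Par (Par P1' (Res j B)) P2')" .
      qed
      finally show ?thesis .
    qed
    moreover have "k \<notin> set A'" "set A' \<inter> fn (Res j B) = {}" using r(3) by auto
    ultimately show ?thesis unfolding S1_def using rc by blast
  qed
next
  case (rn_amb P Q j)
  then show ?case using comp_leaf_Amb by fastforce
next
  case (rn_par P Q R)
  from rn_par.prems(1) show ?case
  proof (cases rule: comp_Par_cases)
    case (l X1)
    have mR: "m \<notin> tops R" using rn_par.prems tops_ugs by fastforce
    have mQ: "m \<in> tops Q" using rn_par.prems mR by auto
    have "m \<notin> fn X1" "m \<notin> ugs P" using rn_par.prems l by auto
    then obtain k A P1 P2 B where h: "scong X1 (resl A (Par (Amb k P1) P2))" "scong C (Pre (Open k) B)"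
      "scong Q (resl A (Par (Par P1 B) P2))" "k \<notin> set A" "set A \<inter> fn B = {}"
      using rn_par.IH[OF l(2)] rn_par.prems mQ unfolding S1_def by blast
    obtain A' P1' P2' where r: "scong (resl A (Par (Amb k P1) P2)) (resl A' (Par (Amb k P1') P2'))"
      "scong (resl A (Par (Par P1 B) P2)) (resl A' (Par (Par P1' B) P2'))"
      "set A' \<inter> (insert k (fn B \<union> fn R)) = {}"
      using shape1_rename[of "insert k (fn B \<union> fn R)" k A B P1 P2] h
      by auto
    have "scong X (Par (resl A' (Par (Amb k P1') P2')) R)" using l h(1) r(1) by (meson sc_parL sc_trans)
    also have "scong \<dots> (resl A' (Par (Par (Amb k P1') P2') R))" using r(3) by (intro resl_par) auto
    also have "scong \<dots> (resl A' (Par (Amb k P1') (Par P2' R)))" by (intro resl_cong sc_assoc)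
    finally have x: "scong X (resl A' (Par (Amb k P1') (Par P2' R)))" .
    have "scong (Par Q R) (Par (resl A' (Par (Par P1' B) P2')) R)" using h(3) r(2) by (meson sc_parL sc_trans)
    also have "scong \<dots> (resl A' (Par (Par (Par P1' B) P2') R))" using r(3) by (intro resl_par) auto
    also have "scong \<dots> (resl A' (Par (Par P1' B) (Par P2' R)))" by (intro resl_cong sc_assoc)
    finally have q: "scong (Par Q R) (resl A' (Par (Par P1' B) (Par P2' R)))" .
    have "k \<notin> set A'" "set A' \<inter> fn B = {}" using r(3) by auto
    then show ?thesis unfolding S1_def using x q h(2) by blast
  next
    case (r X1)
    have "m \<notin> fn P" using r rn_par.prems by auto
    then have "m \<notin> tops Q" using rn_fn[OF rn_par.hyps] tops_fn by blast
    moreover have "m \<notin> tops R" using rn_par.prems tops_ugs by fastforce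
    ultimately show ?thesis using rn_par.prems by auto
  qed
qed

lemma tops_single: "deep P \<le> 1 \<Longrightarrow> x \<in> tops P \<Longrightarrow> tops P = {x}"
proof (induction P)
  case (Par P Q)
  have dd: "deep P = 0 \<or> deep Q = 0" using Par.prems(1) by (simp, linarith)
  show ?case
  proof (cases "deep P = 0")
    case True then have "tops P = {}" using deep0_fn tops_fn by blast
    then show ?thesis using Par by auto
  next
    case False then have "deep Q = 0" using dd by simp
    then have "tops Q = {}" using deep0_fn tops_fn by blast
    then show ?thesis using Par by auto
  qed
qed auto

definition S2 :: "name \<Rightarrow> proc \<Rightarrow> proc \<Rightarrow> proc \<Rightarrow> bool" where
  "S2 m X C Q \<longleftrightarrow> (\<exists>A Z R S. scong X (resl A (Par Z (Pre (Open m) R))) \<and> scong C (Amb m S) \<and>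
      scong Q (resl A (Par Z (Par R S))) \<and> m \<notin> set A \<and> set A \<inter> fn S = {})"

lemma anal2: "rn P Q \<Longrightarrow> Comp P X C \<Longrightarrow> tops C = {m} \<Longrightarrow> deep C = 1 \<Longrightarrow> m \<notin> tops Q \<Longrightarrow> S2 m X C Q"
proof (induction arbitrary: X C rule: rn.induct)
  case (rn_in n m' P Q R)
  from rn_in.prems(1) show ?case
  proof (cases rule: comp_Par_cases)
    case (l X1) then show ?thesis using comp_leaf_Amb rn_in.prems by fastforce
  next
    case (r X1) then show ?thesis using comp_leaf_Amb rn_in.prems by fastforce
  qed
next
  case (rn_out m' n P Q R)
  then show ?case using comp_leaf_Amb by fastforce
next
  case (rn_open k P Q)
  from rn_open.prems(1) show ?case
  proof (cases rule: comp_Par_cases)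
    case (l X1) then show ?thesis using comp_leaf_Pre rn_open.prems by fastforce
  next
    case (r X1)
    then have h: "X1 = Nil" "C = Amb k Q" using comp_leaf_Amb by auto
    then have km: "k = m" using rn_open.prems by auto
    have "scong X (resl [] (Par Nil (Pre (Open m) P)))" using r h km by (simp add: sc_comm)
    moreover have "scong (Par P Q) (resl [] (Par Nil (Par P Q)))" using sc_nilL sc_sym by fastforce
    ultimately show ?thesis unfolding S2_def using h km sc_refl by fastforce
  qed
next
  case (rn_res P Q j)
  from rn_res.prems(1) show ?case
  proof (cases rule: comp_Res_cases)
    case base then show ?thesis using rn_res.prems rn_deep[OF rn_res.hyps] by simp
  next
    case (rx X1)
    have jm: "j \<noteq> m" using rx rn_res.prems tops_fn by fastforce
    have mQ: "m \<notin> tops Q" using rn_res.prems jm by auto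
    obtain A Z R S where h: "scong X1 (resl A (Par Z (Pre (Open m) R)))" "scong C (Amb m S)"
      "scong Q (resl A (Par Z (Par R S)))" "m \<notin> set A" "set A \<inter> fn S = {}"
      using rn_res.IH[OF rx(2)] rn_res.prems mQ unfolding S2_def by blast
    have fC: "fn C = insert m (fn S)" using scong_fn[OF h(2)] by simp
    have "scong X (resl (j # A) (Par Z (Pre (Open m) R)))" using rx h by (simp add: sc_res)
    moreover have "scong (Res j Q) (resl (j # A) (Par Z (Par R S)))" using h by (simp add: sc_res)
    moreover have "m \<notin> set (j # A)" "set (j # A) \<inter> fn S = {}" using h rx fC jm by auto
    ultimately show ?thesis unfolding S2_def using h by blast
  next
    case (rc C1)
    have d1: "deep C1 = 1" using rc rn_res.prems by simp
    have "m \<in> tops C1" using rc rn_res.prems by auto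
    then have tC1: "tops C1 = {m}" using tops_single d1 by auto
    have jm: "j \<noteq> m" using rc rn_res.prems tC1 by auto
    have mQ: "m \<notin> tops Q" using rn_res.prems jm by auto
    obtain A Z R S where h: "scong X (resl A (Par Z (Pre (Open m) R)))" "scong C1 (Amb m S)"
      "scong Q (resl A (Par Z (Par R S)))" "m \<notin> set A" "set A \<inter> fn S = {}"
      using rn_res.IH[OF rc(2) tC1 d1 mQ] unfolding S2_def by blast
    obtain A' Z' R' where r: "scong (resl A (Par Z (Pre (Open m) R))) (resl A' (Par Z' (Pre (Open m) R')))"
      "scong (resl A (Par Z (Par R S))) (resl A' (Par Z' (Par R' S)))"
      "set A' \<inter> (insert j (insert m (fn S))) = {}"
      using shape2_rename[of "insert j (insert m (fn S))" m A S Z R] h by auto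
    have x: "scong X (resl A' (Par Z' (Pre (Open m) R')))" using h(1) r(1) by (rule sc_trans)
    have jZ: "j \<notin> fn Z'" "j \<notin> fn R'" using scong_fn[OF x] rc r(3) by auto
    have "scong C (Amb m (Res j S))"
    proof -
      have "scong C (Res j (Amb m S))" using rc h by (simp add: sc_res)
      also have "scong \<dots> (Amb m (Res j S))" using jm by (intro sc_res_amb) simp
      finally show ?thesis .
    qed
    moreover have "scong (Res j Q) (resl A' (Par Z' (Par R' (Res j S))))"
    proof -
      have "scong (Res j Q) (Res j (resl A' (Par Z' (Par R' S))))"
        using h(3) r(2) by (meson sc_res sc_trans)
      also have "scong \<dots> (resl A' (Res j (Par Z' (Par R' S))))" using r(3) by (intro res_resl) auto
      also have "scong \<dots> (resl A' (Par Z' (Par R' (Res j S))))"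
      proof (rule resl_cong)
        have "scong (Res j (Par Z' (Par R' S))) (Par Z' (Res j (Par R' S)))" using jZ(1) by (rule sc_res_par)
        also have "scong \<dots> (Par Z' (Par R' (Res j S)))" using jZ(2) by (intro sc_parR sc_res_par)
        finally show "scong (Res j (Par Z' (Par R' S))) (Par Z' (Par R' (Res j S)))" .
      qed
      finally show ?thesis .
    qed
    moreover have "m \<notin> set A'" "set A' \<inter> fn (Res j S) = {}" using r(3) by auto
    ultimately show ?thesis unfolding S2_def using x by blast
  qed
next
  case (rn_amb P Q j)
  then show ?case using comp_leaf_Amb rn_deep by fastforce
next
  case (rn_par P Q R)
  from rn_par.prems(1) show ?case
  proof (cases rule: comp_Par_cases)
    case (l X1)
    have mQ: "m \<notin> tops Q" using rn_par.prems by auto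
    obtain A Z R0 S where h: "scong X1 (resl A (Par Z (Pre (Open m) R0)))" "scong C (Amb m S)"
      "scong Q (resl A (Par Z (Par R0 S)))" "m \<notin> set A" "set A \<inter> fn S = {}"
      using rn_par.IH[OF l(2)] rn_par.prems mQ unfolding S2_def by blast
    obtain A' Z' R' where r: "scong (resl A (Par Z (Pre (Open m) R0))) (resl A' (Par Z' (Pre (Open m) R')))"
      "scong (resl A (Par Z (Par R0 S))) (resl A' (Par Z' (Par R' S)))"
      "set A' \<inter> (insert m (fn S \<union> fn R)) = {}"
      using shape2_rename[of "insert m (fn S \<union> fn R)" m A S Z R0] h by auto
    have "scong X (Par (resl A' (Par Z' (Pre (Open m) R'))) R)" using l h(1) r(1) by (meson sc_parL sc_trans)
    also have "scong \<dots> (resl A' (Par (Par Z' (Pre (Open m) R')) R))" using r(3) by (intro resl_par) auto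
    also have "scong \<dots> (resl A' (Par (Par Z' R) (Pre (Open m) R')))" by (intro resl_cong sc_swap_mid)
    finally have x: "scong X (resl A' (Par (Par Z' R) (Pre (Open m) R')))" .
    have "scong (Par Q R) (Par (resl A' (Par Z' (Par R' S))) R)" using h(3) r(2) by (meson sc_parL sc_trans)
    also have "scong \<dots> (resl A' (Par (Par Z' (Par R' S)) R))" using r(3) by (intro resl_par) auto
    also have "scong \<dots> (resl A' (Par (Par Z' R) (Par R' S)))" by (intro resl_cong sc_swap_mid)
    finally have q: "scong (Par Q R) (resl A' (Par (Par Z' R) (Par R' S)))" .
    have "m \<notin> set A'" "set A' \<inter> fn S = {}" using r(3) by auto
    then show ?thesis unfolding S2_def using x q h(2) by blast
  next
    case (r X1)
    have "m \<in> tops R" using comp_sound[OF r(2)] scong_tops rn_par.prems by fastforce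
    then show ?thesis using rn_par.prems by auto
  qed
qed

lemma split_lemma: "Comp (resl A (Par Z (Pre M R0))) X C \<Longrightarrow> m \<in> fn (Pre M R0) \<Longrightarrow> m \<notin> set A \<Longrightarrow>
  set A \<inter> F = {} \<Longrightarrow> m \<in> fn X \<or> (\<exists>AC Xr. set AC \<subseteq> set A \<and> geq X Xr \<and> geq C (resl AC (Pre M R0)) \<and>
    (\<forall>L'. fn L' \<subseteq> fn (Pre M R0) \<union> F \<longrightarrow> scong (resl A (Par Z L')) (Par Xr (resl AC L'))))"
proof (induction A arbitrary: X C)
  case Nil
  from Nil.prems(1) have "Comp (Par Z (Pre M R0)) X C" by simp
  then show ?case
  proof (cases rule: comp_Par_cases)
    case (l X1) then show ?thesis using Nil.prems by auto
  next
    case (r X1)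
    then have h: "X1 = Nil" "C = Pre M R0" using comp_leaf_Pre by auto
    have "\<forall>L'. scong (Par Z L') (Par (Par Z Nil) L')" by (simp add: sc_parL sc_nil')
    then show ?thesis using r h by (intro disjI2 exI[of _ "[]"] exI[of _ "Par Z Nil"]) simp
  qed
next
  case (Cons a A)
  from Cons.prems(1) have "Comp (Res a (resl A (Par Z (Pre M R0)))) X C" by simp
  then show ?case
  proof (cases rule: comp_Res_cases)
    case base
    have npr: "np (resl B P) = np P" for B P by (induction B) auto
    have "np Z = 0" using base npr by simp
    then have dZ: "deep Z = 0" by (rule np0_deep)
    then have fZ: "fn Z = {}" by (rule deep0_fn)
    have g1: "geq X Z" using base dZ unfolding geq_def by (simp add: sc_sym deep0_er)
    have "scong C (resl (a # A) (Par Z (Pre M R0)))" using base by (simp add: sc_refl)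
    also have "scong \<dots> (Par Z (resl (a # A) (Pre M R0)))" using fZ by (intro sc_sym[OF resl_parL]) auto
    finally have "geq C (resl (a # A) (Pre M R0))" using dZ by (meson geq_garbL scong_geq_trans)
    moreover have "\<forall>L'. scong (resl (a # A) (Par Z L')) (Par Z (resl (a # A) L'))"
    proof
      fix L'
      have "scong (Par Z (resl (a # A) L')) (resl (a # A) (Par Z L'))" using fZ by (intro resl_parL) auto
      then show "scong (resl (a # A) (Par Z L')) (Par Z (resl (a # A) L'))" by (rule sc_sym)
    qed
    ultimately show ?thesis using g1 by (intro disjI2 exI[of _ "a # A"] exI[of _ Z]) auto
  next
    case (rx X1)
    have am: "a \<noteq> m" using Cons.prems by auto
    have IH: "m \<in> fn X1 \<or> (\<exists>AC Xr. set AC \<subseteq> set A \<and> geq X1 Xr \<and> geq C (resl AC (Pre M R0)) \<and>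
      (\<forall>L'. fn L' \<subseteq> fn (Pre M R0) \<union> F \<longrightarrow> scong (resl A (Par Z L')) (Par Xr (resl AC L'))))"
      using Cons.IH[OF rx(2)] Cons.prems by auto
    then show ?thesis
    proof
      assume "m \<in> fn X1" then show ?thesis using rx am by auto
    next
      assume "\<exists>AC Xr. set AC \<subseteq> set A \<and> geq X1 Xr \<and> geq C (resl AC (Pre M R0)) \<and>
        (\<forall>L'. fn L' \<subseteq> fn (Pre M R0) \<union> F \<longrightarrow> scong (resl A (Par Z L')) (Par Xr (resl AC L')))"
      then obtain AC Xr where h: "set AC \<subseteq> set A" "geq X1 Xr" "geq C (resl AC (Pre M R0))"
        "\<forall>L'. fn L' \<subseteq> fn (Pre M R0) \<union> F \<longrightarrow> scong (resl A (Par Z L')) (Par Xr (resl AC L'))" by blast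
      have aC: "a \<notin> fn (Pre M R0) - set AC" using geq_fn[OF h(3)] rx by auto
      have aF: "a \<notin> F" using Cons.prems by auto
      have "\<forall>L'. fn L' \<subseteq> fn (Pre M R0) \<union> F \<longrightarrow> scong (resl (a # A) (Par Z L')) (Par (Res a Xr) (resl AC L'))"
      proof (intro allI impI)
        fix L' assume fL: "fn L' \<subseteq> fn (Pre M R0) \<union> F"
        have "scong (resl (a # A) (Par Z L')) (Res a (Par Xr (resl AC L')))"
          using h(4) fL by (simp add: sc_res)
        also have "scong \<dots> (Par (Res a Xr) (resl AC L'))" using aC aF fL by (intro sc_res_parR) auto
        finally show "scong (resl (a # A) (Par Z L')) (Par (Res a Xr) (resl AC L'))" .
      qed
      then show ?thesis using h rx by (intro disjI2 exI[of _ AC] exI[of _ "Res a Xr"]) (auto intro: geq_res)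
    qed
  next
    case (rc C1)
    have IH: "m \<in> fn X \<or> (\<exists>AC Xr. set AC \<subseteq> set A \<and> geq X Xr \<and> geq C1 (resl AC (Pre M R0)) \<and>
      (\<forall>L'. fn L' \<subseteq> fn (Pre M R0) \<union> F \<longrightarrow> scong (resl A (Par Z L')) (Par Xr (resl AC L'))))"
      using Cons.IH[OF rc(2)] Cons.prems by auto
    then show ?thesis
    proof
      assume "m \<in> fn X" then show ?thesis by auto
    next
      assume "\<exists>AC Xr. set AC \<subseteq> set A \<and> geq X Xr \<and> geq C1 (resl AC (Pre M R0)) \<and>
        (\<forall>L'. fn L' \<subseteq> fn (Pre M R0) \<union> F \<longrightarrow> scong (resl A (Par Z L')) (Par Xr (resl AC L')))"
      then obtain AC Xr where h: "set AC \<subseteq> set A" "geq X Xr" "geq C1 (resl AC (Pre M R0))"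
        "\<forall>L'. fn L' \<subseteq> fn (Pre M R0) \<union> F \<longrightarrow> scong (resl A (Par Z L')) (Par Xr (resl AC L'))" by blast
      have aX: "a \<notin> fn Xr" using geq_fn[OF h(2)] rc by auto
      have "\<forall>L'. fn L' \<subseteq> fn (Pre M R0) \<union> F \<longrightarrow> scong (resl (a # A) (Par Z L')) (Par Xr (resl (a # AC) L'))"
      proof (intro allI impI)
        fix L' assume fL: "fn L' \<subseteq> fn (Pre M R0) \<union> F"
        have "scong (resl (a # A) (Par Z L')) (Res a (Par Xr (resl AC L')))"
          using h(4) fL by (simp add: sc_res)
        also have "scong \<dots> (Par Xr (Res a (resl AC L')))" using aX by (rule sc_res_par)
        finally show "scong (resl (a # A) (Par Z L')) (Par Xr (resl (a # AC) L'))" by simp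
      qed
      moreover have "geq C (resl (a # AC) (Pre M R0))" using rc h(3) by (simp add: geq_res)
      ultimately show ?thesis using h by (intro disjI2 exI[of _ "a # AC"] exI[of _ Xr]) auto
    qed
  qed
qed





lemma gc_resl_shift: "(\<forall>a\<in>set A. a \<in> fn D1 \<longleftrightarrow> a \<in> fn D2) \<Longrightarrow>
   gc (resl A D1) + gc D2 = gc (resl A D2) + gc D1"
proof (induction A)
  case Nil then show ?case by simp
next
  case (Cons a A)
  have "(a \<in> fn D1 - set A) = (a \<in> fn D2 - set A)" using Cons.prems by auto
  then show ?case using Cons by auto
qed

lemma gc_resl_useful: "distinct A \<Longrightarrow> set A \<subseteq> fn D \<Longrightarrow> gc (resl A D) = gc D"
  by (induction A) auto

lemma geq_res_fresh: "j \<notin> fn P \<Longrightarrow> geq (Res j P) P"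
  by (simp add: geq_def sc_refl)

lemma resl_filter: "(\<forall>a\<in>set A. a \<in> fn D \<longleftrightarrow> p a) \<Longrightarrow> geq (resl A D) (resl (filter p (remdups A)) D)"
proof (induction A)
  case Nil then show ?case by simp
next
  case (Cons a A)
  have IH: "geq (resl A D) (resl (filter p (remdups A)) D)" using Cons by auto
  show ?case
  proof (cases "a \<in> set A")
    case True
    then have "geq (Res a (resl A D)) (resl A D)" by (intro geq_res_fresh) simp
    then show ?thesis using IH True by (simp add: geq_trans)
  next
    case False
    show ?thesis
    proof (cases "p a")
      case True
      then show ?thesis using IH False by (simp add: geq_res)
    next
      case pF: False
      then have "a \<notin> fn D" using Cons.prems by auto
      then have "geq (Res a (resl A D)) (resl A D)" by (intro geq_res_fresh) simp
      then show ?thesis using IH False pF by (simp add: geq_trans)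
    qed
  qed
qed

lemma red_resl: "red P Q \<Longrightarrow> red (resl A P) (resl A Q)"
  by (induction A) (auto intro: red_res)

lemma tops_resl: "tops (resl A D) = tops D - set A" by (induction A) auto

lemma construct:
  assumes hP: "scong P (resl A (Par (Amb n P1) P2))" and nA: "n \<notin> set A" and AT: "set A \<inter> fn T1 = {}"
    and hP': "scong P' (resl A (Par (Par P1 T1) P2))"
    and mP: "m \<notin> fn P" and mT: "m \<notin> fn T1" and mA: "m \<notin> set A" and mn: "m \<noteq> n"
  shows "\<exists>P''. red (Par P (Pre (Open n) (Par (Amb m Nil) (Pre (Open m) T1)))) P'' \<and> barb P'' m \<and>
     red P'' P' \<and> \<not> barb P' m"
proof -
  define K where "K = Pre (Open m) T1"
  define G' where "G' = Par (Amb m Nil) K"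
  define G where "G = Pre (Open n) G'"
  define P'' where "P'' = resl A (Par (Par G' P1) P2)"
  have fG: "fn G = insert n (insert m (fn T1))" by (auto simp: G_def G'_def K_def)
  have fP: "fn P = insert n (fn P1 \<union> fn P2) - set A" using scong_fn[OF hP] by simp
  have mP12: "m \<notin> fn P1" "m \<notin> fn P2" using fP mP mA mn by auto
  have r1: "red (Par P G) P''"
  proof -
    have "scong (Par P G) (Par (resl A (Par (Amb n P1) P2)) G)" using hP by (rule sc_parL)
    also have "scong \<dots> (resl A (Par (Par (Amb n P1) P2) G))" using AT nA mA fG by (intro resl_par) auto
    also have "scong \<dots> (resl A (Par (Par G (Amb n P1)) P2))"
      by (intro resl_cong) (meson sc_comm sc_parL sc_swap_mid sc_trans)
    finally have s: "scong (Par P G) (resl A (Par (Par G (Amb n P1)) P2))" .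
    have "red (Par G (Amb n P1)) (Par G' P1)" unfolding G_def by (rule red_open)
    then have "red (Par (Par G (Amb n P1)) P2) (Par (Par G' P1) P2)" by (rule red_par)
    then have "red (resl A (Par (Par G (Amb n P1)) P2)) P''" unfolding P''_def by (rule red_resl)
    then show ?thesis using s sc_refl red_scong by blast
  qed
  have b1: "barb P'' m"
  proof -
    have "scong P'' (resl A (Par (Amb m Nil) (Par (Par K P1) P2)))"
      unfolding P''_def G'_def by (intro resl_cong) (meson sc_assoc sc_parL sc_trans)
    then show ?thesis unfolding barb_def using mA by blast
  qed
  have r2: "red P'' P'"
  proof -
    have s: "scong P'' (resl A (Par (Par K (Amb m Nil)) (Par P1 P2)))"
      unfolding P''_def G'_def by (intro resl_cong) (meson sc_assoc sc_comm sc_parL sc_trans)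
    have "red (Par K (Amb m Nil)) (Par T1 Nil)" unfolding K_def by (rule red_open)
    then have "red (Par (Par K (Amb m Nil)) (Par P1 P2)) (Par (Par T1 Nil) (Par P1 P2))" by (rule red_par)
    then have r: "red (resl A (Par (Par K (Amb m Nil)) (Par P1 P2))) (resl A (Par (Par T1 Nil) (Par P1 P2)))"
      by (rule red_resl)
    have "scong (resl A (Par (Par T1 Nil) (Par P1 P2))) (resl A (Par (Par P1 T1) P2))"
    proof (intro resl_cong)
      have "scong (Par (Par T1 Nil) (Par P1 P2)) (Par T1 (Par P1 P2))" by (rule sc_parL, rule sc_nil)
      also have "scong \<dots> (Par (Par P1 P2) T1)" by (rule sc_comm)
      also have "scong \<dots> (Par (Par P1 T1) P2)" by (rule sc_swap_mid)
      finally show "scong (Par (Par T1 Nil) (Par P1 P2)) (Par (Par P1 T1) P2)" .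
    qed
    also have "scong \<dots> P'" using hP' by (rule sc_sym)
    finally show ?thesis using s r red_scong by blast
  qed
  have nb: "\<not> barb P' m"
  proof
    assume "barb P' m"
    then have "m \<in> fn P'" using barb_tops tops_fn by blast
    then show False using scong_fn[OF hP'] mP12 mT mA by auto
  qed
  show ?thesis using r1 b1 r2 nb unfolding G_def G'_def K_def P''_def by blast
qed




lemma forward:
  assumes mX: "m \<notin> fn X0" and bP: "barb P'' m"
    and r1: "red (Par X0 (Pre (Open n) (Par (Amb m Nil) (Pre (Open m) T1)))) P''"
    and r2: "red P'' Y" and nb: "\<not> barb Y m"
  shows "coopen_MI n T1 X0 Y"
proof -
  define K where "K = Pre (Open m) T1"
  define G' where "G' = Par (Amb m Nil) K"
  define G where "G = Pre (Open n) G'"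
  have r1': "red (Par X0 G) P''" using r1 by (simp add: G_def G'_def K_def)
  obtain P0 Q0 where h0: "scong (Par X0 G) P0" "rn P0 Q0" "scong Q0 P''" using red_rn[OF r1'] by blast
  have c0: "Comp (Par X0 G) (Par X0 Nil) G" by (rule c_parR, rule c_base) (auto simp: G_def)
  obtain X C where hc: "Comp P0 X C" "geq (Par X0 Nil) X" "geq G C" using comp_transfer[OF h0(1) c0] by blast
  have acC: "ac C = 0" using geq_nat[OF hc(3)] by (simp add: G_def)
  have fX: "fn X = fn X0" using geq_fn[OF hc(2)] by simp
  have ugP0: "m \<notin> ugs P0"
  proof -
    have "ugs P0 = ugs (Par X0 G)" using scong_ugs[OF h0(1)] by simp
    then show ?thesis using mX ugs_fn[of X0] by (auto simp: G_def)
  qed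
  have tQ0: "m \<in> tops Q0" using barb_tops[OF bP] scong_tops[OF h0(3)] by simp
  obtain k A P1 P2 B where s1: "scong X (resl A (Par (Amb k P1) P2))" "scong C (Pre (Open k) B)"
      "scong Q0 (resl A (Par (Par P1 B) P2))" "k \<notin> set A" "set A \<inter> fn B = {}"
    using anal1[OF h0(2) hc(1) acC _ ugP0 tQ0] mX fX unfolding S1_def by auto
  have "geq G (Pre (Open k) B)" using hc(3) s1(2) by (rule geq_scong_trans)
  then have "scong (Pre (Open n) (er G')) (Pre (Open k) (er B))" by (simp add: geq_def G_def)
  then have kn: "k = n" and gB: "geq G' B" using pre_inv by (auto simp: geq_def)
  have fB: "fn B = insert m (fn T1)" using geq_fn[OF gB] by (auto simp: G'_def K_def)
  have mA: "m \<notin> set A" and AT: "set A \<inter> fn T1 = {}" and nA: "n \<notin> set A" using s1 fB kn by auto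
  have fX2: "fn X0 = insert n (fn P1 \<union> fn P2) - set A" using scong_fn[OF s1(1)] fX kn by simp
  have mP12: "m \<notin> fn P1" "m \<notin> fn P2" using fX2 mX mA by auto
  define V where "V = resl A (Par P1 P2)"
  have mV: "m \<notin> fn V" using mP12 by (simp add: V_def)
  have sP'': "scong P'' (Par B V)"
  proof -
    have "scong P'' (resl A (Par (Par P1 B) P2))" using sc_trans[OF sc_sym[OF h0(3)] s1(3)] .
    also have "scong \<dots> (resl A (Par B (Par P1 P2)))"
      by (intro resl_cong sc_trans[OF sc_parL[OF sc_comm] sc_assoc])
    also have "scong \<dots> (Par B V)" unfolding V_def using s1(5) by (intro sc_sym[OF resl_parL]) auto
    finally show ?thesis .
  qed
  have gcP'': "gc P'' = gc X0 + gc T1"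
  proof -
    have sh: "gc (resl A (Par (Amb k P1) P2)) + gc (Par (Par P1 B) P2) = gc (resl A (Par (Par P1 B) P2)) + gc (Par (Amb k P1) P2)"
      using s1(4,5) by (intro gc_resl_shift) auto
    have "gc P'' = gc Q0" using scong_inv_nat[OF h0(3)] by simp
    also have "\<dots> = gc (resl A (Par (Par P1 B) P2))" using scong_inv_nat[OF s1(3)] by simp
    also have "\<dots> = gc X + gc B" using sh scong_inv_nat[OF s1(1)] by simp
    also have "\<dots> = gc X + gc C" using scong_inv_nat[OF s1(2)] by simp
    also have "\<dots> = gc P0" using scong_inv_nat[OF conjunct1[OF comp_sound[OF hc(1)]]] by simp
    also have "\<dots> = gc X0 + gc T1" using scong_inv_nat[OF h0(1)] by (simp add: G_def G'_def K_def)
    finally show ?thesis .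
  qed
  define M0 where "M0 = Amb m (Nil::proc)"
  define K' where "K' = Pre (Open m) (er T1)"
  define W where "W = Par (gar (gc B)) V"
  have mW: "m \<notin> fn W" using mV by (simp add: W_def)
  have sP2: "scong P'' (Par M0 (Par K' W))"
  proof -
    have eB: "scong (er B) (Par M0 K')" using gB by (simp add: geq_def G'_def K_def M0_def K'_def sc_sym)
    have "scong P'' (Par B V)" by (fact sP'')
    also have "scong \<dots> (Par (Par (er B) (gar (gc B))) V)" by (rule sc_parL, rule er_decomp)
    also have "scong \<dots> (Par (Par (Par M0 K') (gar (gc B))) V)" using eB by (intro sc_parL)
    also have "scong \<dots> (Par (Par M0 K') W)" unfolding W_def by (rule sc_assoc)
    also have "scong \<dots> (Par M0 (Par K' W))" by (rule sc_assoc)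
    finally show ?thesis .
  qed
  obtain P0' Q0' where h1: "scong P'' P0'" "rn P0' Q0'" "scong Q0' Y" using red_rn[OF r2] by blast
  have c1: "Comp (Par M0 (Par K' W)) (Par Nil (Par K' W)) M0" by (rule c_parL, rule c_base) (auto simp: M0_def)
  have s01: "scong (Par M0 (Par K' W)) P0'" using sc_trans[OF sc_sym[OF sP2] h1(1)] .
  obtain X2 C2 where hc2: "Comp P0' X2 C2" "geq (Par Nil (Par K' W)) X2" "geq M0 C2"
    using comp_transfer[OF s01 c1] by blast
  have tC2: "tops C2 = {m}" using geq_tops[OF hc2(3)] by (simp add: M0_def)
  have dC2: "deep C2 = 1" using geq_nat[OF hc2(3)] by (simp add: M0_def)
  have tQ0': "m \<notin> tops Q0'" using nb tops_barb scong_tops[OF h1(3)] by auto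
  obtain A2 Z R S where s2: "scong X2 (resl A2 (Par Z (Pre (Open m) R)))" "scong C2 (Amb m S)"
      "scong Q0' (resl A2 (Par Z (Par R S)))" "m \<notin> set A2" "set A2 \<inter> fn S = {}"
    using anal2[OF h1(2) hc2(1) tC2 dC2 tQ0'] unfolding S2_def by blast
  define X' where "X' = resl A2 (Par Z (Pre (Open m) R))"
  have gX': "geq X' (Par Nil (Par K' W))"
    using geq_sym[OF geq_scong_trans[OF hc2(2) s2(1)]] unfolding X'_def .
  define W' where "W' = Par (er W) (gar (gc X'))"
  have sX': "scong (Par K' W') X'"
  proof -
    have e: "scong (er X') (Par Nil (Par K' (er W)))" using gX' by (simp add: geq_def K'_def)
    have "scong X' (Par (er X') (gar (gc X')))" by (rule er_decomp)
    also have "scong \<dots> (Par (Par Nil (Par K' (er W))) (gar (gc X')))" using e by (rule sc_parL)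
    also have "scong \<dots> (Par (Par K' (er W)) (gar (gc X')))" by (rule sc_parL, rule sc_nilL)
    also have "scong \<dots> (Par K' W')" unfolding W'_def by (rule sc_assoc)
    finally show ?thesis by (rule sc_sym)
  qed
  have c2: "Comp (Par K' W') (Par Nil W') K'" by (rule c_parL, rule c_base) (auto simp: K'_def)
  obtain X3 C3 where hc3: "Comp X' X3 C3" "geq (Par Nil W') X3" "geq K' C3"
    using comp_transfer[OF sX' c2] by blast
  have fX3: "fn X3 = fn W" using geq_fn[OF hc3(2)] by (simp add: W'_def)
  have spl: "m \<in> fn X3 \<or> (\<exists>AC Xr. set AC \<subseteq> set A2 \<and> geq X3 Xr \<and> geq C3 (resl AC (Pre (Open m) R)) \<and>
    (\<forall>L'. fn L' \<subseteq> fn (Pre (Open m) R) \<union> fn S \<longrightarrow> scong (resl A2 (Par Z L')) (Par Xr (resl AC L'))))"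
    using split_lemma[of A2 Z "Open m" R X3 C3 m "fn S"] hc3(1) s2(4,5) unfolding X'_def by auto
  then obtain AC Xr where sp: "set AC \<subseteq> set A2" "geq X3 Xr" "geq C3 (resl AC (Pre (Open m) R))"
    "\<forall>L'. fn L' \<subseteq> fn (Pre (Open m) R) \<union> fn S \<longrightarrow> scong (resl A2 (Par Z L')) (Par Xr (resl AC L'))"
    using fX3 mW by blast
  have mAC: "m \<notin> set AC" using sp(1) s2(4) by auto
  have "geq K' (Pre (Open m) (resl AC R))"
  proof -
    have "geq K' (resl AC (Pre (Open m) R))" using hc3(3) sp(3) by (rule geq_trans)
    moreover have "scong (resl AC (Pre (Open m) R)) (Pre (Open m) (resl AC R))" using mAC by (intro resl_pre) auto
    ultimately show ?thesis by (rule geq_scong_trans)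
  qed
  then have gR: "geq T1 (resl AC R)" using pre_inv by (auto simp: geq_def K'_def)
  have dS: "deep S = 0" using geq_nat[OF hc2(3)] scong_inv_nat[OF s2(2)] by (simp add: M0_def)
  have sY: "scong Y (Par Xr (Par (resl AC R) S))"
  proof -
    have "scong Y Q0'" using h1(3) by (rule sc_sym)
    also have "scong \<dots> (resl A2 (Par Z (Par R S)))" by (fact s2(3))
    also have "scong \<dots> (Par Xr (resl AC (Par R S)))" using sp(4)[rule_format, of "Par R S"] by auto
    also have "scong \<dots> (Par Xr (Par (resl AC R) S))"
      using sp(1) s2(5) by (intro sc_parR sc_sym[OF resl_par]) auto
    finally show ?thesis .
  qed
  have gcY: "gc Y = gc X0 + gc T1"
  proof -
    have sh: "gc (resl A2 (Par Z (Pre (Open m) R))) + gc (Par Z (Par R S)) = gc (resl A2 (Par Z (Par R S))) + gc (Par Z (Pre (Open m) R))"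
      using s2(4,5) by (intro gc_resl_shift) auto
    have "gc Y = gc Q0'" using scong_inv_nat[OF h1(3)] by simp
    also have "\<dots> = gc (resl A2 (Par Z (Par R S)))" using scong_inv_nat[OF s2(3)] by simp
    also have "\<dots> = gc X2 + gc S" using sh scong_inv_nat[OF s2(1)] by simp
    also have "\<dots> = gc X2 + gc C2" using scong_inv_nat[OF s2(2)] by simp
    also have "\<dots> = gc P0'" using scong_inv_nat[OF conjunct1[OF comp_sound[OF hc2(1)]]] by simp
    also have "\<dots> = gc P''" using scong_inv_nat[OF h1(1)] by simp
    finally show ?thesis using gcP'' by simp
  qed
  have gY: "geq Y (Par V T1)"
  proof -
    have "geq Y (Par Xr (Par (resl AC R) S))" using sY by (rule scong_geq)
    also have "geq \<dots> (Par W (Par T1 Nil))"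
    proof (intro geq_par)
      have "geq Xr X3" using sp(2) by (rule geq_sym)
      also have "geq \<dots> (Par Nil W')" using hc3(2) by (rule geq_sym)
      also have "geq \<dots> W'" by (rule geq_garbL) simp
      also have "geq \<dots> (er W)" unfolding W'_def by (rule geq_garb) simp
      also have "geq \<dots> W" by (rule geq_er)
      finally show "geq Xr W" .
      show "geq (resl AC R) T1" using gR by (rule geq_sym)
      show "geq S Nil" using dS by (simp add: geq_def deep0_er)
    qed
    also have "geq \<dots> (Par V T1)"
    proof -
      have "geq (Par W (Par T1 Nil)) (Par V T1)" unfolding W_def
        by (intro geq_par) (auto intro: geq_garbL geq_garb)
      then show ?thesis .
    qed
    finally show ?thesis .
  qed
  define p where "p = (\<lambda>a. a \<in> fn P1 \<union> fn P2)"
  define A' where "A' = filter p (remdups A)"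
  define k0 where "k0 = gc X0"
  define Q1 where "Q1 = er P1"
  define Q2 where "Q2 = Par (er P2) (gar k0)"
  have A'sub: "set A' \<subseteq> set A" "set A' \<subseteq> fn P1 \<union> fn P2" "distinct A'" by (auto simp: A'_def p_def)
  have fQ: "fn Q1 = fn P1" "fn Q2 = fn P2" by (auto simp: Q1_def Q2_def)
  have gQ: "geq P1 Q1" "geq P2 Q2" unfolding Q1_def Q2_def
    by (auto intro: geq_sym[OF geq_er] geq_trans[OF geq_sym[OF geq_er] geq_sym[OF geq_garb]])
  have eqX0: "scong X0 (resl A' (Par (Amb n Q1) Q2))"
  proof (rule geq_gc)
    have "geq X0 (Par X0 Nil)" by (rule geq_sym, rule geq_garb) simp
    also have "geq \<dots> X" by (fact hc(2))
    also have "geq \<dots> (resl A (Par (Amb n P1) P2))" using s1(1) kn by (simp add: scong_geq)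
    also have "geq \<dots> (resl A' (Par (Amb n P1) P2))" unfolding A'_def using nA
      by (intro resl_filter) (auto simp: p_def)
    also have "geq \<dots> (resl A' (Par (Amb n Q1) Q2))" using gQ by (intro geq_resl geq_par geq_amb)
    finally show "geq X0 (resl A' (Par (Amb n Q1) Q2))" .
    have "gc (resl A' (Par (Amb n Q1) Q2)) = gc (Par (Amb n Q1) Q2)"
      using A'sub fQ by (intro gc_resl_useful) auto
    then show "gc X0 = gc (resl A' (Par (Amb n Q1) Q2))" by (simp add: Q1_def Q2_def k0_def)
  qed
  have eqY: "scong Y (resl A' (Par (Par Q1 T1) Q2))"
  proof (rule geq_gc)
    have "geq Y (Par V T1)" by (fact gY)
    also have "geq \<dots> (resl A (Par (Par P1 P2) T1))" unfolding V_def using AT by (intro scong_geq resl_par) auto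
    also have "geq \<dots> (resl A (Par (Par P1 T1) P2))" by (intro scong_geq resl_cong sc_swap_mid)
    also have "geq \<dots> (resl A' (Par (Par P1 T1) P2))" unfolding A'_def using AT
      by (intro resl_filter) (auto simp: p_def)
    also have "geq \<dots> (resl A' (Par (Par Q1 T1) Q2))" using gQ by (intro geq_resl geq_par) auto
    finally show "geq Y (resl A' (Par (Par Q1 T1) Q2))" .
    have "gc (resl A' (Par (Par Q1 T1) Q2)) = gc (Par (Par Q1 T1) Q2)"
      using A'sub fQ by (intro gc_resl_useful) auto
    then show "gc Y = gc (resl A' (Par (Par Q1 T1) Q2))" using gcY by (simp add: Q1_def Q2_def k0_def)
  qed
  have "n \<notin> set A'" "set A' \<inter> fn T1 = {}" using A'sub nA AT by auto
  then show ?thesis unfolding coopen_MI_def using eqX0 eqY by blast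
qed

lemma fresh_name: "finite (S::name set) \<Longrightarrow> \<exists>x. x \<notin> S"
  using ex_new_if_finite[OF infinite_UNIV_nat] by blast

lemma backward: "coopen_MI n T1 P P' \<Longrightarrow> Popen n T1 P P'"
proof -
  assume "coopen_MI n T1 P P'"
  then obtain A P1 P2 where h: "scong P (resl A (Par (Amb n P1) P2))" "n \<notin> set A"
    "set A \<inter> fn T1 = {}" "scong P' (resl A (Par (Par P1 T1) P2))" unfolding coopen_MI_def by blast
  obtain m where m: "m \<notin> fn P \<union> fn T1 \<union> set A \<union> {n}"
    using fresh_name[of "fn P \<union> fn T1 \<union> set A \<union> {n}"] by auto
  then obtain P'' where "red (Par P (Pre (Open n) (Par (Amb m Nil) (Pre (Open m) T1)))) P''"
    "barb P'' m" "red P'' P'" "\<not> barb P' m"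
    using construct[OF h(1) h(2) h(3) h(4)] by auto
  then show ?thesis unfolding Popen_def using m by auto
qed

theorem mainTheorem4:
  fixes n :: name and T1 :: proc
  shows "stable (Popen n T1) bs_bisim \<and>
         (\<forall>P P'. Popen n T1 P P' \<longleftrightarrow> coopen_MI n T1 P P')"
proof
  have iff: "\<forall>P P'. Popen n T1 P P' \<longleftrightarrow> coopen_MI n T1 P P'"
  proof (intro allI iffI)
    fix P P' assume "Popen n T1 P P'"
    then show "coopen_MI n T1 P P'" unfolding Popen_def using forward by auto
  next
    fix P P' assume "coopen_MI n T1 P P'"
    then show "Popen n T1 P P'" by (rule backward)
  qed
  show "stable (Popen n T1) bs_bisim"
    unfolding stable_def
  proof (intro allI impI)
    fix P Q P' assume bq: "bs_bisim P Q" and pp: "Popen n T1 P P'"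
    then obtain R where R: "bs_bisimulation R" "R P Q" unfolding bs_bisim_def by blast
    have "coopen_MI n T1 P P'" using pp iff by blast
    then obtain A P1 P2 where h: "scong P (resl A (Par (Amb n P1) P2))" "n \<notin> set A"
      "set A \<inter> fn T1 = {}" "scong P' (resl A (Par (Par P1 T1) P2))" unfolding coopen_MI_def by blast
    obtain m where m: "m \<notin> fn P \<union> fn Q \<union> fn T1 \<union> set A \<union> {n}"
      using fresh_name[of "fn P \<union> fn Q \<union> fn T1 \<union> set A \<union> {n}"] by auto
    define G where "G = Pre (Open n) (Par (Amb m Nil) (Pre (Open m) T1))"
    obtain P'' where c: "red (Par P G) P''" "barb P'' m" "red P'' P'" "\<not> barb P' m"
      using construct[OF h(1) h(2) h(3) h(4), of m] m unfolding G_def by auto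
    have "red (fill (CParL Hole G) P) P''" using c by simp
    then obtain Q'' where q1: "red (fill (CParL Hole G) Q) Q''" "R P'' Q''"
      using R unfolding bs_bisimulation_def by blast
    have "barb (fill Hole Q'') m" using R q1(2) c(2) unfolding bs_bisimulation_def by (metis fill.simps(1))
    then have bq'': "barb Q'' m" by simp
    have "red (fill Hole P'') P'" using c by simp
    then obtain Q' where q2: "red (fill Hole Q'') Q'" "R P' Q'"
      using R q1(2) unfolding bs_bisimulation_def by blast
    have nbq: "\<not> barb Q' m"
    proof
      assume "barb Q' m"
      moreover have "R Q' P'" using R q2(2) unfolding bs_bisimulation_def by blast
      ultimately have "barb (fill Hole P') m" using R unfolding bs_bisimulation_def by (metis fill.simps(1))
      then show False using c(4) by simp
    qed
    have "Popen n T1 Q Q'" unfolding Popen_def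
      using m bq'' q1(1) q2(1) nbq unfolding G_def by auto
    moreover have "bs_bisim P' Q'" unfolding bs_bisim_def using R(1) q2(2) by blast
    ultimately show "\<exists>Q'. Popen n T1 Q Q' \<and> bs_bisim P' Q'" by blast
  qed
  show "\<forall>P P'. Popen n T1 P P' \<longleftrightarrow> coopen_MI n T1 P P'" by (fact iff)
qed


end
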